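(* Let $\mathscr K$ be a quasivariety of structures and let $n\ge1$ be an integer. Let $\mathbf F=\mathbf F_{\mathscr K}(n)$ be the $n$-generated $\mathscr K$-free structure, let $\mathbf T_n$ be the join semilattice (with $0$) of compact elements of $\operatorname{Con}_{\mathscr K}\mathbf F$, and let $\widehat{\mathscr E}=\{\widehat\varepsilon:\varepsilon\in\operatorname{End}\mathbf F\}$. Then the lattice of all quasi-equational theories that (1) contain the theory of $\mathscr K$ and (2) are determined relative to $\mathscr K$ by quasi-identities in at most $n$ variables, ordered by inclusion, is isomorphic to $\operatorname{Con}\mathbf S_n$, where $\mathbf S_n=\langle\mathbf T_n,\vee,0,\widehat{\mathscr E}\rangle$.
   Context: Structures have a signature of function and relation symbols; homomorphisms preserve operations and map relations into relations. A congruence on a structure $\mathbf A$ is a pair $\theta=\langle\theta_0,\theta_1\rangle$ with $\theta_0$ an equivalence relation compatible with the operations and, for each relation symbol $R$ of arity $m$, a set $\theta_1^R$ with $R^{\mathbf A}\subseteq\theta_1^R\subseteq A^m$ closed under componentwise $\theta_0$-equivalence. A quasivariety is a class of structures closed under substructures, direct products and ultraproducts, equivalently axiomatized by quasi-identities $\&_i\alpha_i\Rightarrow\beta$ with atomic formulae of the form $s\approx t$ or $R(\mathbf s)$ (equality being true equality); a quasi-equational theory is the set of quasi-identities valid in a quasivariety. A congruence $\psi$ of $\mathbf F$ is a $\mathscr K$-congruence if $\mathbf F/\psi\in\mathscr K$; these form an algebraic lattice $\operatorname{Con}_{\mathscr K}\mathbf F$, whose compact elements are the finite joins of the principal $\mathscr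 K$-congruences $\operatorname{con}_{\mathscr K}\alpha$ generated by single atomic formulae $\alpha$ over $\mathbf F$. For $\varepsilon\in\operatorname{End}\mathbf F$, $\widehat\varepsilon$ is defined by $\widehat\varepsilon(\operatorname{con}_{\mathscr K}(s,t))=\operatorname{con}_{\mathscr K}(\varepsilon s,\varepsilon t)$, $\widehat\varepsilon(\operatorname{con}_{\mathscr K}R(\mathbf s))=\operatorname{con}_{\mathscr K}R(\varepsilon\mathbf s)$, $\widehat\varepsilon(\bigvee_j\varphi_j)=\bigvee_j\widehat\varepsilon\varphi_j$; it is well defined and preserves joins and $0$. $\operatorname{Con}\mathbf S_n$ is the lattice of equivalence relations on $T_n$ compatible with $\vee$ and all $\widehat\varepsilon$. *)

theory Defs
  imports Main
begin

datatype ('f,'v) trm = Var 'v | Fn 'f "('f,'v) trm list"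

datatype ('f,'r,'v) atom = Eq "('f,'v) trm" "('f,'v) trm" | Rel 'r "('f,'v) trm list"

text \<open>A quasi-identity  p1 & ... & pk ==> c  is the pair (premises, conclusion).\<close>
type_synonym ('f,'r) qid = "('f,'r,nat) atom list \<times> ('f,'r,nat) atom"

fun wf_trm :: "('f \<Rightarrow> nat) \<Rightarrow> ('f,'v) trm \<Rightarrow> bool" where
  "wf_trm af (Var v) = True"
| "wf_trm af (Fn f ts) = (length ts = af f \<and> (\<forall>t\<in>set ts. wf_trm af t))"

fun wf_atom :: "('f \<Rightarrow> nat) \<Rightarrow> ('r \<Rightarrow> nat) \<Rightarrow> ('f,'r,'v) atom \<Rightarrow> bool" where
  "wf_atom af ar (Eq s t) = (wf_trm af s \<and> wf_trm af t)"
| "wf_atom af ar (Rel r ts) = (length ts = ar r \<and> (\<forall>t\<in>set ts. wf_trm af t))"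

definition wf_qid :: "('f \<Rightarrow> nat) \<Rightarrow> ('r \<Rightarrow> nat) \<Rightarrow> ('f,'r) qid \<Rightarrow> bool" where
  "wf_qid af ar q = ((\<forall>a\<in>set (fst q). wf_atom af ar a) \<and> wf_atom af ar (snd q))"

fun tvars :: "('f,'v) trm \<Rightarrow> 'v set" where
  "tvars (Var v) = {v}"
| "tvars (Fn f ts) = (\<Union>t\<in>set ts. tvars t)"

fun avars :: "('f,'r,'v) atom \<Rightarrow> 'v set" where
  "avars (Eq s t) = tvars s \<union> tvars t"
| "avars (Rel r ts) = (\<Union>t\<in>set ts. tvars t)"

definition qvars :: "('f,'r) qid \<Rightarrow> nat set" where
  "qvars q = (\<Union>a\<in>set (fst q). avars a) \<union> avars (snd q)"

record ('a,'f,'r) struc =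
  carrier :: "'a set"
  fnc :: "'f \<Rightarrow> 'a list \<Rightarrow> 'a"
  rel :: "'r \<Rightarrow> 'a list set"

definition is_struc :: "('f \<Rightarrow> nat) \<Rightarrow> ('r \<Rightarrow> nat) \<Rightarrow> ('a,'f,'r) struc \<Rightarrow> bool" where
  "is_struc af ar A =
     (carrier A \<noteq> {} \<and>
      (\<forall>f xs. set xs \<subseteq> carrier A \<and> length xs = af f \<longrightarrow> fnc A f xs \<in> carrier A) \<and>
      (\<forall>r. rel A r \<subseteq> {xs. set xs \<subseteq> carrier A \<and> length xs = ar r}))"

fun eval :: "('a,'f,'r) struc \<Rightarrow> ('v \<Rightarrow> 'a) \<Rightarrow> ('f,'v) trm \<Rightarrow> 'a" where
  "eval A h (Var v) = h v"
| "eval A h (Fn f ts) = fnc A f (map (eval A h) ts)"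

fun holds :: "('a,'f,'r) struc \<Rightarrow> ('v \<Rightarrow> 'a) \<Rightarrow> ('f,'r,'v) atom \<Rightarrow> bool" where
  "holds A h (Eq s t) = (eval A h s = eval A h t)"
| "holds A h (Rel r ts) = (map (eval A h) ts \<in> rel A r)"

definition sat_qid :: "('a,'f,'r) struc \<Rightarrow> ('f,'r) qid \<Rightarrow> bool" where
  "sat_qid A q =
     (\<forall>h. range h \<subseteq> carrier A \<longrightarrow> (\<forall>p\<in>set (fst q). holds A h p) \<longrightarrow> holds A h (snd q))"

text \<open>Models of a set of quasi-identities; the quasivariety axiomatized by Sig
  is the class of all A with model af ar Sig A.\<close>
definition model :: "('f \<Rightarrow> nat) \<Rightarrow> ('r \<Rightarrow> nat) \<Rightarrow> ('f,'r) qid set \<Rightarrow> ('a,'f,'r) struc \<Rightarrow> bool" where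
  "model af ar Sig A = (is_struc af ar A \<and> (\<forall>q\<in>Sig. sat_qid A q))"

text \<open>Validity of a quasi-identity in all models of Sig is
  tested on models whose carrier lives in the type of sets of terms; this type
  is large enough to contain (a copy of) every relatively free model generated by
  the variables, so this coincides with consequence over structures of any type.\<close>
definition Cn :: "('f \<Rightarrow> nat) \<Rightarrow> ('r \<Rightarrow> nat) \<Rightarrow> ('f,'r) qid set \<Rightarrow> ('f,'r) qid set" where
  "Cn af ar Sig = {q. wf_qid af ar q \<and>
     (\<forall>A :: (('f,nat) trm set,'f,'r) struc. model af ar Sig A \<longrightarrow> sat_qid A q)}"

definition qe_theory :: "('f \<Rightarrow> nat) \<Rightarrow> ('r \<Rightarrow> nat) \<Rightarrow> ('f,'r) qid set \<Rightarrow> bool" where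
  "qe_theory af ar T = (Cn af ar T = T)"

definition QTheories :: "('f \<Rightarrow> nat) \<Rightarrow> ('r \<Rightarrow> nat) \<Rightarrow> ('f,'r) qid set \<Rightarrow> nat \<Rightarrow> ('f,'r) qid set set" where
  "QTheories af ar Sig n = {T. qe_theory af ar T \<and> Cn af ar Sig \<subseteq> T \<and>
     (\<exists>Phi. (\<forall>q\<in>Phi. wf_qid af ar q \<and> card (qvars q) \<le> n) \<and> T = Cn af ar (Sig \<union> Phi))}"

definition Tn :: "('f \<Rightarrow> nat) \<Rightarrow> nat \<Rightarrow> ('f,nat) trm set" where
  "Tn af n = {t. wf_trm af t \<and> tvars t \<subseteq> {..<n}}"

definition fcls :: "('f \<Rightarrow> nat) \<Rightarrow> ('r \<Rightarrow> nat) \<Rightarrow> ('f,'r) qid set \<Rightarrow> nat \<Rightarrow> ('f,nat) trm \<Rightarrow> ('f,nat) trm set" where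
  "fcls af ar Sig n t = {s \<in> Tn af n. ([], Eq s t) \<in> Cn af ar Sig}"

definition Free :: "('f \<Rightarrow> nat) \<Rightarrow> ('r \<Rightarrow> nat) \<Rightarrow> ('f,'r) qid set \<Rightarrow> nat \<Rightarrow> (('f,nat) trm set,'f,'r) struc" where
  "Free af ar Sig n =
     \<lparr> carrier = fcls af ar Sig n ` Tn af n,
       fnc = (\<lambda>f Xs. fcls af ar Sig n (Fn f (map (\<lambda>X. SOME t. t \<in> X) Xs))),
       rel = (\<lambda>r. {map (fcls af ar Sig n) ts | ts. set ts \<subseteq> Tn af n \<and> length ts = ar r \<and>
                     ([], Rel r ts) \<in> Cn af ar Sig}) \<rparr>"

type_synonym ('a,'r) cong = "('a \<times> 'a) set \<times> ('r \<Rightarrow> 'a list set)"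

definition is_cong :: "('f \<Rightarrow> nat) \<Rightarrow> ('r \<Rightarrow> nat) \<Rightarrow> ('a,'f,'r) struc \<Rightarrow> ('a,'r) cong \<Rightarrow> bool" where
  "is_cong af ar A th =
     (equiv (carrier A) (fst th) \<and>
      (\<forall>f xs ys. length xs = af f \<and> list_all2 (\<lambda>x y. (x,y) \<in> fst th) xs ys \<longrightarrow>
                 (fnc A f xs, fnc A f ys) \<in> fst th) \<and>
      (\<forall>r. rel A r \<subseteq> snd th r \<and>
           snd th r \<subseteq> {xs. set xs \<subseteq> carrier A \<and> length xs = ar r} \<and>
           (\<forall>xs ys. xs \<in> snd th r \<and> list_all2 (\<lambda>x y. (x,y) \<in> fst th) xs ys \<longrightarrow> ys \<in> snd th r)))"

definition quot :: "('a,'f,'r) struc \<Rightarrow> ('a,'r) cong \<Rightarrow> ('a set,'f,'r) struc" where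
  "quot A th =
     \<lparr> carrier = carrier A // fst th,
       fnc = (\<lambda>f Xs. fst th `` {fnc A f (map (\<lambda>X. SOME x. x \<in> X) Xs)}),
       rel = (\<lambda>r. {map (\<lambda>x. fst th `` {x}) xs | xs. xs \<in> snd th r}) \<rparr>"

definition ConK :: "('f \<Rightarrow> nat) \<Rightarrow> ('r \<Rightarrow> nat) \<Rightarrow> ('f,'r) qid set \<Rightarrow> ('a,'f,'r) struc \<Rightarrow> ('a,'r) cong set" where
  "ConK af ar Sig A = {th. is_cong af ar A th \<and> model af ar Sig (quot A th)}"

definition cle :: "('a,'r) cong \<Rightarrow> ('a,'r) cong \<Rightarrow> bool" where
  "cle th ps = (fst th \<subseteq> fst ps \<and> (\<forall>r. snd th r \<subseteq> snd ps r))"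

definition is_lub :: "('a,'r) cong set \<Rightarrow> ('a,'r) cong set \<Rightarrow> ('a,'r) cong \<Rightarrow> bool" where
  "is_lub L S u = (u \<in> L \<and> (\<forall>x\<in>S. cle x u) \<and> (\<forall>v\<in>L. (\<forall>x\<in>S. cle x v) \<longrightarrow> cle u v))"

definition lub :: "('a,'r) cong set \<Rightarrow> ('a,'r) cong set \<Rightarrow> ('a,'r) cong" where
  "lub L S = (THE u. is_lub L S u)"

definition compact :: "('a,'r) cong set \<Rightarrow> ('a,'r) cong \<Rightarrow> bool" where
  "compact L x = (x \<in> L \<and> (\<forall>S. S \<subseteq> L \<longrightarrow> cle x (lub L S) \<longrightarrow>
                     (\<exists>S'. S' \<subseteq> S \<and> finite S' \<and> cle x (lub L S'))))"

datatype ('a,'r) fatom = FEq 'a 'a | FRel 'r "'a list"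

fun fatom_in :: "('a,'r) cong \<Rightarrow> ('a,'r) fatom \<Rightarrow> bool" where
  "fatom_in th (FEq a b) = ((a,b) \<in> fst th)"
| "fatom_in th (FRel r xs) = (xs \<in> snd th r)"

fun fatom_over :: "('r \<Rightarrow> nat) \<Rightarrow> ('a,'f,'r) struc \<Rightarrow> ('a,'r) fatom \<Rightarrow> bool" where
  "fatom_over ar A (FEq a b) = (a \<in> carrier A \<and> b \<in> carrier A)"
| "fatom_over ar A (FRel r xs) = (set xs \<subseteq> carrier A \<and> length xs = ar r)"

fun fatom_map :: "('a \<Rightarrow> 'a) \<Rightarrow> ('a,'r) fatom \<Rightarrow> ('a,'r) fatom" where
  "fatom_map e (FEq a b) = FEq (e a) (e b)"
| "fatom_map e (FRel r xs) = FRel r (map e xs)"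

definition pcon :: "('a,'r) cong set \<Rightarrow> ('a,'r) fatom \<Rightarrow> ('a,'r) cong" where
  "pcon L al = (THE th. th \<in> L \<and> fatom_in th al \<and> (\<forall>ps\<in>L. fatom_in ps al \<longrightarrow> cle th ps))"

definition is_hom :: "('f \<Rightarrow> nat) \<Rightarrow> ('a,'f,'r) struc \<Rightarrow> ('b,'f,'r) struc \<Rightarrow> ('a \<Rightarrow> 'b) \<Rightarrow> bool" where
  "is_hom af A B h =
     ((\<forall>x\<in>carrier A. h x \<in> carrier B) \<and>
      (\<forall>f xs. set xs \<subseteq> carrier A \<and> length xs = af f \<longrightarrow> h (fnc A f xs) = fnc B f (map h xs)) \<and>
      (\<forall>r xs. xs \<in> rel A r \<longrightarrow> map h xs \<in> rel B r))"

text \<open>hat-epsilon: hat e (join_j con alpha_j) = join_j con (e alpha_j).\<close>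
definition hat :: "('r \<Rightarrow> nat) \<Rightarrow> ('a,'f,'r) struc \<Rightarrow> ('a,'r) cong set \<Rightarrow> ('a \<Rightarrow> 'a) \<Rightarrow> ('a,'r) cong \<Rightarrow> ('a,'r) cong" where
  "hat ar A L e ph = (THE ps. \<exists>als. (\<forall>al\<in>set als. fatom_over ar A al) \<and>
       ph = lub L (pcon L ` set als) \<and> ps = lub L (pcon L ` fatom_map e ` set als))"

definition TnK :: "('f \<Rightarrow> nat) \<Rightarrow> ('r \<Rightarrow> nat) \<Rightarrow> ('f,'r) qid set \<Rightarrow> nat \<Rightarrow> (('f,nat) trm set,'r) cong set" where
  "TnK af ar Sig n = {x. compact (ConK af ar Sig (Free af ar Sig n)) x}"

definition ConSn :: "('f \<Rightarrow> nat) \<Rightarrow> ('r \<Rightarrow> nat) \<Rightarrow> ('f,'r) qid set \<Rightarrow> nat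
     \<Rightarrow> ((('f,nat) trm set,'r) cong \<times> (('f,nat) trm set,'r) cong) set set" where
  "ConSn af ar Sig n =
    (let F = Free af ar Sig n; L = ConK af ar Sig F; T = TnK af ar Sig n in
     {E. equiv T E \<and>
         (\<forall>a b c d. (a,b) \<in> E \<and> (c,d) \<in> E \<longrightarrow> (lub L {a,c}, lub L {b,d}) \<in> E) \<and>
         (\<forall>e. is_hom af F F e \<longrightarrow> (\<forall>a b. (a,b) \<in> E \<longrightarrow> (hat ar F L e a, hat ar F L e b) \<in> E))})"

end

theory Submission
  imports Defs
begin


fun ev :: "('a,'f,'r) struc \<Rightarrow> ('v \<Rightarrow> 'a) \<Rightarrow> ('f,'r,'v) atom \<Rightarrow> ('a,'r) fatom" where
  "ev A k (Eq s t) = FEq (eval A k s) (eval A k t)"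
| "ev A k (Rel r ts) = FRel r (map (eval A k) ts)"

definition OV :: "('r \<Rightarrow> nat) \<Rightarrow> ('a,'f,'r) struc \<Rightarrow> ('a,'r) fatom set" where
  "OV ar A = {al. fatom_over ar A al}"

definition structS :: "('f \<Rightarrow> nat) \<Rightarrow> ('r \<Rightarrow> nat) \<Rightarrow> ('a,'f,'r) struc \<Rightarrow> ('a,'r) fatom set \<Rightarrow> bool" where
  "structS af ar A D \<longleftrightarrow> D \<subseteq> OV ar A \<and> (\<forall>x\<in>carrier A. FEq x x \<in> D) \<and>
     (\<forall>x y. FEq x y \<in> D \<longrightarrow> FEq y x \<in> D) \<and>
     (\<forall>x y z. FEq x y \<in> D \<longrightarrow> FEq y z \<in> D \<longrightarrow> FEq x z \<in> D) \<and>
     (\<forall>f xs ys. length xs = af f \<and> list_all2 (\<lambda>x y. FEq x y \<in> D) xs ys \<longrightarrow> FEq (fnc A f xs) (fnc A f ys) \<in> D) \<and>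
     (\<forall>r xs. xs \<in> rel A r \<longrightarrow> FRel r xs \<in> D) \<and>
     (\<forall>r xs ys. FRel r xs \<in> D \<and> list_all2 (\<lambda>x y. FEq x y \<in> D) xs ys \<longrightarrow> FRel r ys \<in> D)"

definition closedS :: "('f,'r) qid set \<Rightarrow> ('a,'f,'r) struc \<Rightarrow> ('a,'r) fatom set \<Rightarrow> bool" where
  "closedS X A D \<longleftrightarrow> (\<forall>q\<in>X. \<forall>k. range k \<subseteq> carrier A \<longrightarrow> (\<forall>p\<in>set (fst q). ev A k p \<in> D) \<longrightarrow> ev A k (snd q) \<in> D)"

definition At :: "('a,'r) cong \<Rightarrow> ('a,'r) fatom set" where
  "At th = {al. fatom_in th al}"

definition mk :: "('a,'r) fatom set \<Rightarrow> ('a,'r) cong" where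
  "mk D = ({(x,y). FEq x y \<in> D}, \<lambda>r. {xs. FRel r xs \<in> D})"

lemma At_mk[simp]: "At (mk D) = D"
proof -
  have "fatom_in (mk D) al \<longleftrightarrow> al \<in> D" for al by (cases al) (auto simp: mk_def)
  thus ?thesis by (auto simp: At_def)
qed

lemma mk_At[simp]: "mk (At th) = th"
  by (cases th) (auto simp: mk_def At_def)

lemma At_eq_iff: "At th = At ps \<longleftrightarrow> th = ps"
  by (metis mk_At)

lemma FEq_At[simp]: "FEq x y \<in> At th \<longleftrightarrow> (x,y) \<in> fst th" by (simp add: At_def)
lemma FRel_At[simp]: "FRel r xs \<in> At th \<longleftrightarrow> xs \<in> snd th r" by (simp add: At_def)

lemma cle_At: "cle th ps \<longleftrightarrow> At th \<subseteq> At ps"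
proof
  assume "cle th ps" thus "At th \<subseteq> At ps"
    unfolding cle_def At_def
  proof (clarsimp)
    fix al assume "fst th \<subseteq> fst ps" "\<forall>r. snd th r \<subseteq> snd ps r" "fatom_in th al"
    thus "fatom_in ps al" by (cases al) auto
  qed
next
  assume a: "At th \<subseteq> At ps"
  have "fst th \<subseteq> fst ps"
  proof (rule subrelI)
    fix x y assume "(x,y) \<in> fst th"
    hence "FEq x y \<in> At th" by simp
    hence "FEq x y \<in> At ps" using a by blast
    thus "(x,y) \<in> fst ps" by simp
  qed
  moreover have "snd th r \<subseteq> snd ps r" for r
  proof
    fix xs assume "xs \<in> snd th r"
    hence "FRel r xs \<in> At th" by simp
    hence "FRel r xs \<in> At ps" using a by blast
    thus "xs \<in> snd ps r" by simp
  qed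
  ultimately show "cle th ps" by (simp add: cle_def)
qed

lemma OV_simps[simp]:
  "FEq x y \<in> OV ar A \<longleftrightarrow> x \<in> carrier A \<and> y \<in> carrier A"
  "FRel r xs \<in> OV ar A \<longleftrightarrow> set xs \<subseteq> carrier A \<and> length xs = ar r"
  by (auto simp: OV_def)

lemma eval_in:
  assumes "is_struc af ar A" "wf_trm af t" "\<forall>v. k v \<in> carrier A"
  shows "eval A k t \<in> carrier A"
  using assms(2)
proof (induction t)
  case (Var v) thus ?case using assms(3) by simp
next
  case (Fn f ts)
  have "set (map (eval A k) ts) \<subseteq> carrier A" using Fn by auto
  moreover have "length (map (eval A k) ts) = af f" using Fn by simp
  ultimately show ?case using assms(1) by (simp add: is_struc_def)
qed

lemma ev_OV:
  assumes "is_struc af ar A" "wf_atom af ar a" "\<forall>v. k v \<in> carrier A"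
  shows "ev A k a \<in> OV ar A"
  using assms by (cases a) (auto intro: eval_in)

lemma eval_cong:
  "(\<forall>v\<in>tvars t. h v = k v) \<Longrightarrow> eval A h t = eval A k t"
proof (induction t)
  case (Fn f ts)
  hence "map (eval A h) ts = map (eval A k) ts" by (intro map_cong) auto
  thus ?case by (metis eval.simps(2))
qed simp

lemma ev_cong:
  "(\<forall>v\<in>avars a. h v = k v) \<Longrightarrow> ev A h a = ev A k a"
  by (cases a) (auto intro: eval_cong)



lemma is_cong_D:
  assumes "is_cong af ar A th"
  shows "equiv (carrier A) (fst th)"
    and "\<And>f xs ys. length xs = af f \<Longrightarrow> list_all2 (\<lambda>x y. (x,y) \<in> fst th) xs ys \<Longrightarrow> (fnc A f xs, fnc A f ys) \<in> fst th"
    and "\<And>r. rel A r \<subseteq> snd th r"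
    and "\<And>r. snd th r \<subseteq> {xs. set xs \<subseteq> carrier A \<and> length xs = ar r}"
    and "\<And>r xs ys. xs \<in> snd th r \<Longrightarrow> list_all2 (\<lambda>x y. (x,y) \<in> fst th) xs ys \<Longrightarrow> ys \<in> snd th r"
proof -
  have abc: "equiv (carrier A) (fst th) \<and> (\<forall>f xs ys. length xs = af f \<and> list_all2 (\<lambda>x y. (x,y) \<in> fst th) xs ys \<longrightarrow>
                 (fnc A f xs, fnc A f ys) \<in> fst th) \<and>
   (\<forall>r. rel A r \<subseteq> snd th r \<and>
           snd th r \<subseteq> {xs. set xs \<subseteq> carrier A \<and> length xs = ar r} \<and>
           (\<forall>xs ys. xs \<in> snd th r \<and> list_all2 (\<lambda>x y. (x,y) \<in> fst th) xs ys \<longrightarrow> ys \<in> snd th r))"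
    using assms unfolding is_cong_def .
  note a = abc[THEN conjunct1] and b = abc[THEN conjunct2, THEN conjunct1] and c = abc[THEN conjunct2, THEN conjunct2]
  show "equiv (carrier A) (fst th)" by (fact a)
  show "\<And>f xs ys. length xs = af f \<Longrightarrow> list_all2 (\<lambda>x y. (x,y) \<in> fst th) xs ys \<Longrightarrow> (fnc A f xs, fnc A f ys) \<in> fst th"
    using b by blast
  show "\<And>r. rel A r \<subseteq> snd th r" using c by blast
  show "\<And>r. snd th r \<subseteq> {xs. set xs \<subseteq> carrier A \<and> length xs = ar r}" using c by blast
  show "\<And>r xs ys. xs \<in> snd th r \<Longrightarrow> list_all2 (\<lambda>x y. (x,y) \<in> fst th) xs ys \<Longrightarrow> ys \<in> snd th r"
  proof -
    fix r xs ys assume "xs \<in> snd th r" "list_all2 (\<lambda>x y. (x,y) \<in> fst th) xs ys"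
    moreover have "\<forall>xs ys. xs \<in> snd th r \<and> list_all2 (\<lambda>x y. (x,y) \<in> fst th) xs ys \<longrightarrow> ys \<in> snd th r"
      using c by (rule allE) (elim conjE)
    ultimately show "ys \<in> snd th r" by blast
  qed
qed

lemma cong_snd:
  assumes "is_cong af ar A th" "xs \<in> snd th r"
  shows "set xs \<subseteq> carrier A" "length xs = ar r"
  using is_cong_D(4)[OF assms(1), of r] assms(2) by auto

lemma cong_closed:
  assumes "is_cong af ar A th" "xs \<in> snd th r" "list_all2 (\<lambda>x y. (x,y) \<in> fst th) xs ys"
  shows "ys \<in> snd th r"
  using is_cong_D(5)[OF assms] .

lemma quot_eval:
  assumes A: "is_struc af ar A" and c: "is_cong af ar A th" and "wf_trm af t" and k: "\<forall>v. k v \<in> carrier A"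
  shows "eval (quot A th) (\<lambda>v. fst th `` {k v}) t = fst th `` {eval A k t}"
  using assms(3)
proof (induction t)
  case (Var v) thus ?case by simp
next
  case (Fn f ts)
  have eq: "equiv (carrier A) (fst th)" using is_cong_D(1)[OF c] .
  have ih: "map (eval (quot A th) (\<lambda>v. fst th `` {k v})) ts = map (\<lambda>t. fst th `` {eval A k t}) ts"
    using Fn by (intro map_cong) auto
  define xs where "xs = map (eval A k) ts"
  define ys where "ys = map (\<lambda>t. SOME x. x \<in> fst th `` {eval A k t}) ts"
  have "list_all2 (\<lambda>x y. (x,y) \<in> fst th) xs ys"
    unfolding list_all2_conv_all_nth xs_def ys_def
  proof (intro conjI allI impI)
    fix i assume i: "i < length (map (eval A k) ts)"
    hence ti: "ts ! i \<in> set ts" by simp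
    hence ci: "eval A k (ts ! i) \<in> carrier A" using Fn eval_in[OF A _ k] by auto
    hence "\<exists>x. x \<in> fst th `` {eval A k (ts ! i)}" using equiv_class_self[OF eq] by blast
    hence "(SOME x. x \<in> fst th `` {eval A k (ts ! i)}) \<in> fst th `` {eval A k (ts ! i)}" by (rule someI_ex)
    thus "(map (eval A k) ts ! i, map (\<lambda>t. SOME x. x \<in> fst th `` {eval A k t}) ts ! i) \<in> fst th"
      using i by simp
  qed simp
  moreover have "length xs = af f" using Fn by (simp add: xs_def)
  ultimately have r: "(fnc A f xs, fnc A f ys) \<in> fst th" using is_cong_D(2)[OF c] by blast
  have "eval (quot A th) (\<lambda>v. fst th `` {k v}) (Fn f ts) = fst th `` {fnc A f ys}"
  proof -
    have "eval (quot A th) (\<lambda>v. fst th `` {k v}) (Fn f ts) = fnc (quot A th) f (map (\<lambda>t. fst th `` {eval A k t}) ts)"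
      using ih by (metis eval.simps(2))
    also have "\<dots> = fst th `` {fnc A f (map (\<lambda>X. SOME x. x \<in> X) (map (\<lambda>t. fst th `` {eval A k t}) ts))}"
      by (simp add: quot_def)
    also have "map (\<lambda>X. SOME x. x \<in> X) (map (\<lambda>t. fst th `` {eval A k t}) ts) = ys"
      by (simp add: ys_def)
    finally show ?thesis .
  qed
  also have "\<dots> = fst th `` {fnc A f xs}"
    using r eq by (metis equiv_class_eq_iff)
  finally show ?case by (simp add: xs_def)
qed

lemma holds_quot:
  assumes A: "is_struc af ar A" and c: "is_cong af ar A th" and w: "wf_atom af ar a" and k: "\<forall>v. k v \<in> carrier A"
  shows "holds (quot A th) (\<lambda>v. fst th `` {k v}) a \<longleftrightarrow> ev A k a \<in> At th"
proof -
  have eq: "equiv (carrier A) (fst th)" using is_cong_D(1)[OF c] .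
  show ?thesis
  proof (cases a)
    case (Eq s t)
    have ws: "wf_trm af s" "wf_trm af t" using w Eq by auto
    have "holds (quot A th) (\<lambda>v. fst th `` {k v}) a \<longleftrightarrow> fst th `` {eval A k s} = fst th `` {eval A k t}"
      unfolding Eq holds.simps quot_eval[OF A c ws(1) k] quot_eval[OF A c ws(2) k] ..
    also have "\<dots> \<longleftrightarrow> (eval A k s, eval A k t) \<in> fst th"
      by (rule eq_equiv_class_iff[OF eq eval_in[OF A ws(1) k] eval_in[OF A ws(2) k]])
    finally show ?thesis unfolding Eq ev.simps FEq_At .
  next
    case (Rel r ts)
    have wts: "\<forall>t\<in>set ts. wf_trm af t" using w Rel by simp
    have m: "map (eval (quot A th) (\<lambda>v. fst th `` {k v})) ts = map (\<lambda>x. fst th `` {x}) (map (eval A k) ts)"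
      unfolding map_map
    proof (rule map_cong[OF refl])
      fix x assume "x \<in> set ts"
      hence "wf_trm af x" using wts by blast
      thus "eval (quot A th) (\<lambda>v. fst th `` {k v}) x = ((\<lambda>x. fst th `` {x}) \<circ> eval A k) x"
        using quot_eval[OF A c _ k] by simp
    qed
    have cx: "set (map (eval A k) ts) \<subseteq> carrier A"
    proof
      fix x assume "x \<in> set (map (eval A k) ts)"
      then obtain t where t: "t \<in> set ts" "x = eval A k t" by auto
      thus "x \<in> carrier A" using eval_in[OF A _ k] wts by blast
    qed
    have "map (\<lambda>x. fst th `` {x}) (map (eval A k) ts) \<in> rel (quot A th) r \<longleftrightarrow> map (eval A k) ts \<in> snd th r"
    proof
      assume "map (\<lambda>x. fst th `` {x}) (map (eval A k) ts) \<in> rel (quot A th) r"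
      then obtain ys where ys: "ys \<in> snd th r" and me: "map (\<lambda>x. fst th `` {x}) ys = map (\<lambda>x. fst th `` {x}) (map (eval A k) ts)"
        by (auto simp: quot_def)
      have cy: "set ys \<subseteq> carrier A" using cong_snd(1)[OF c ys] .
      have len: "length ys = length (map (eval A k) ts)" using me by (metis length_map)
      have "list_all2 (\<lambda>x y. (x,y) \<in> fst th) ys (map (eval A k) ts)"
        unfolding list_all2_conv_all_nth
      proof (intro conjI allI impI)
        fix i assume i: "i < length ys"
        have i': "i < length (map (eval A k) ts)" using i len by simp
        have "fst th `` {ys ! i} = map (\<lambda>x. fst th `` {x}) ys ! i" by (simp only: nth_map[OF i])
        also have "\<dots> = map (\<lambda>x. fst th `` {x}) (map (eval A k) ts) ! i" using me by (rule arg_cong)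
        also have "\<dots> = fst th `` {map (eval A k) ts ! i}" by (simp only: nth_map[OF i'])
        finally have e: "fst th `` {ys ! i} = fst th `` {map (eval A k) ts ! i}" .
        have c1: "ys ! i \<in> carrier A" using cy nth_mem[OF i] by blast
        have c2: "map (eval A k) ts ! i \<in> carrier A" using cx nth_mem[OF i'] by blast
        show "(ys ! i, map (eval A k) ts ! i) \<in> fst th" using eq_equiv_class_iff[OF eq c1 c2] e by simp
      qed (rule len)
      thus "map (eval A k) ts \<in> snd th r" using cong_closed[OF c ys] by blast
    next
      assume "map (eval A k) ts \<in> snd th r"
      hence "map (\<lambda>x. fst th `` {x}) (map (eval A k) ts) \<in> {map (\<lambda>x. fst th `` {x}) xs | xs. xs \<in> snd th r}"
        by blast
      thus "map (\<lambda>x. fst th `` {x}) (map (eval A k) ts) \<in> rel (quot A th) r"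
        by (simp add: quot_def)
    qed
    moreover have "holds (quot A th) (\<lambda>v. fst th `` {k v}) a \<longleftrightarrow> map (\<lambda>x. fst th `` {x}) (map (eval A k) ts) \<in> rel (quot A th) r"
      unfolding Rel holds.simps m ..
    moreover have "ev A k a \<in> At th \<longleftrightarrow> map (eval A k) ts \<in> snd th r"
      unfolding Rel ev.simps FRel_At ..
    ultimately show ?thesis by blast
  qed
qed

lemma is_cong_structS:
  "is_cong af ar A th \<longleftrightarrow> structS af ar A (At th)"
proof
  assume c: "is_cong af ar A th"
  have eq: "equiv (carrier A) (fst th)" and
    cf: "\<And>f xs ys. length xs = af f \<Longrightarrow> list_all2 (\<lambda>x y. (x, y) \<in> fst th) xs ys \<Longrightarrow>
                 (fnc A f xs, fnc A f ys) \<in> fst th" and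
    cr: "\<And>r. rel A r \<subseteq> snd th r" and
    cc: "\<And>r xs ys. xs \<in> snd th r \<Longrightarrow> list_all2 (\<lambda>x y. (x,y) \<in> fst th) xs ys \<Longrightarrow> ys \<in> snd th r"
    using is_cong_D[OF c] by blast+
  have "At th \<subseteq> OV ar A"
  proof
    fix al assume al: "al \<in> At th" 
    have sub: "fst th \<subseteq> carrier A \<times> carrier A" using eq by (simp add: equiv_def)
    show "al \<in> OV ar A"
    proof (cases al)
      case (FEq x y) thus ?thesis using al sub by auto
    next
      case (FRel r xs) thus ?thesis using al cong_snd[OF c, of xs r] by simp
    qed
  qed
  moreover have "\<forall>x\<in>carrier A. FEq x x \<in> At th" using eq by (simp add: equiv_def refl_on_def)
  moreover have "\<forall>x y. FEq x y \<in> At th \<longrightarrow> FEq y x \<in> At th" using eq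
    by (simp add: equiv_def) (meson symD)
  moreover have "\<forall>x y z. FEq x y \<in> At th \<longrightarrow> FEq y z \<in> At th \<longrightarrow> FEq x z \<in> At th" using eq
    by (simp add: equiv_def) (meson transD)
  moreover have "\<forall>f xs ys. length xs = af f \<and> list_all2 (\<lambda>x y. FEq x y \<in> At th) xs ys \<longrightarrow> FEq (fnc A f xs) (fnc A f ys) \<in> At th"
    using cf by simp
  moreover have "\<forall>r xs. xs \<in> rel A r \<longrightarrow> FRel r xs \<in> At th"
    using cr by (simp only: FRel_At) blast
  moreover have "\<forall>r xs ys. FRel r xs \<in> At th \<and> list_all2 (\<lambda>x y. FEq x y \<in> At th) xs ys \<longrightarrow> FRel r ys \<in> At th"
    using cc by (simp only: FEq_At FRel_At) blast
  ultimately show "structS af ar A (At th)" unfolding structS_def by blast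
next
  assume s: "structS af ar A (At th)"
  have sov: "At th \<subseteq> OV ar A" and
    s1: "\<And>x. x\<in>carrier A \<Longrightarrow> FEq x x \<in> At th" and
    s2: "\<And>x y. FEq x y \<in> At th \<Longrightarrow> FEq y x \<in> At th" and
    s3: "\<And>x y z. FEq x y \<in> At th \<Longrightarrow> FEq y z \<in> At th \<Longrightarrow> FEq x z \<in> At th" and
    s4: "\<And>f xs ys. length xs = af f \<Longrightarrow> list_all2 (\<lambda>x y. FEq x y \<in> At th) xs ys \<Longrightarrow> FEq (fnc A f xs) (fnc A f ys) \<in> At th" and
    s5: "\<And>r xs. xs \<in> rel A r \<Longrightarrow> FRel r xs \<in> At th" and
    s6: "\<And>r xs ys. FRel r xs \<in> At th \<Longrightarrow> list_all2 (\<lambda>x y. FEq x y \<in> At th) xs ys \<Longrightarrow> FRel r ys \<in> At th"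
    using s unfolding structS_def by blast+
  have sub: "fst th \<subseteq> carrier A \<times> carrier A"
  proof (rule subrelI)
    fix x y assume "(x,y) \<in> fst th" hence "FEq x y \<in> At th" by simp
    hence "FEq x y \<in> OV ar A" using sov by blast
    thus "(x,y) \<in> carrier A \<times> carrier A" by simp
  qed
  have sr: "snd th r \<subseteq> {xs. set xs \<subseteq> carrier A \<and> length xs = ar r}" for r
  proof
    fix xs assume "xs \<in> snd th r" hence "FRel r xs \<in> At th" by simp
    hence "FRel r xs \<in> OV ar A" using sov by blast
    thus "xs \<in> {xs. set xs \<subseteq> carrier A \<and> length xs = ar r}" by simp
  qed
  have "refl_on (carrier A) (fst th)" using s1 unfolding refl_on_def by simp
  moreover have "sym (fst th)" using s2 by (simp add: sym_def)
  moreover have "trans (fst th)" using s3 unfolding trans_def by simp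
  ultimately have "equiv (carrier A) (fst th)" using sub by (simp add: equiv_def)
  moreover have "\<forall>f xs ys. length xs = af f \<and> list_all2 (\<lambda>x y. (x, y) \<in> fst th) xs ys \<longrightarrow>
                 (fnc A f xs, fnc A f ys) \<in> fst th" using s4 by simp
  moreover have "\<forall>r. rel A r \<subseteq> snd th r \<and>
           snd th r \<subseteq> {xs. set xs \<subseteq> carrier A \<and> length xs = ar r} \<and>
           (\<forall>xs ys. xs \<in> snd th r \<and> list_all2 (\<lambda>x y. (x,y) \<in> fst th) xs ys \<longrightarrow> ys \<in> snd th r)"
    using s5 s6 sr by (simp only: FEq_At FRel_At) blast
  ultimately show "is_cong af ar A th" unfolding is_cong_def by blast
qed

lemma quot_struc:
  assumes A: "is_struc af ar A" and c: "is_cong af ar A th"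
  shows "is_struc af ar (quot A th)"
proof -
  have eq: "equiv (carrier A) (fst th)" using is_cong_D(1)[OF c] .
  have ne: "carrier A // fst th \<noteq> {}" using A by (auto simp: is_struc_def quotient_def)
  have some: "(SOME x. x \<in> X) \<in> carrier A" if "X \<in> carrier A // fst th" for X
  proof -
    have "X \<noteq> {}" using in_quotient_imp_non_empty[OF eq that] .
    hence "(SOME x. x \<in> X) \<in> X" by (simp add: some_in_eq)
    moreover have "X \<subseteq> carrier A" using that eq by (meson in_quotient_imp_subset)
    ultimately show ?thesis by blast
  qed
  have f: "fnc (quot A th) f Xs \<in> carrier (quot A th)"
    if "set Xs \<subseteq> carrier (quot A th)" "length Xs = af f" for f Xs
  proof -
    have "set (map (\<lambda>X. SOME x. x \<in> X) Xs) \<subseteq> carrier A" using that some by (auto simp: quot_def)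
    moreover have "length (map (\<lambda>X. SOME x. x \<in> X) Xs) = af f" using that by simp
    ultimately have "fnc A f (map (\<lambda>X. SOME x. x \<in> X) Xs) \<in> carrier A" using A by (simp add: is_struc_def)
    thus ?thesis by (simp add: quot_def quotientI)
  qed
  have r: "rel (quot A th) r \<subseteq> {xs. set xs \<subseteq> carrier (quot A th) \<and> length xs = ar r}" for r
  proof
    fix ys assume "ys \<in> rel (quot A th) r"
    then obtain xs where xs: "xs \<in> snd th r" "ys = map (\<lambda>x. fst th `` {x}) xs" by (auto simp: quot_def)
    have "set xs \<subseteq> carrier A" "length xs = ar r" using cong_snd[OF c xs(1)] by auto
    thus "ys \<in> {xs. set xs \<subseteq> carrier (quot A th) \<and> length xs = ar r}"
      using xs(2) by (auto simp: quot_def intro: quotientI)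
  qed
  show ?thesis using ne f r by (auto simp: is_struc_def quot_def)
qed

lemma sat_quot:
  assumes A: "is_struc af ar A" and c: "is_cong af ar A th" and w: "wf_qid af ar q"
  shows "sat_qid (quot A th) q \<longleftrightarrow>
    (\<forall>k. range k \<subseteq> carrier A \<longrightarrow> (\<forall>p\<in>set (fst q). ev A k p \<in> At th) \<longrightarrow> ev A k (snd q) \<in> At th)"
proof -
  have eq: "equiv (carrier A) (fst th)" using is_cong_D(1)[OF c] .
  have wp: "\<forall>p\<in>set (fst q). wf_atom af ar p" and wc: "wf_atom af ar (snd q)" using w by (auto simp: wf_qid_def)
  show ?thesis
  proof
    assume s: "sat_qid (quot A th) q"
    show "\<forall>k. range k \<subseteq> carrier A \<longrightarrow> (\<forall>p\<in>set (fst q). ev A k p \<in> At th) \<longrightarrow> ev A k (snd q) \<in> At th"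
    proof (intro allI impI)
      fix k assume k: "range k \<subseteq> carrier A" and p: "\<forall>p\<in>set (fst q). ev A k p \<in> At th"
      have k': "\<forall>v. k v \<in> carrier A" using k by auto
      have "range (\<lambda>v. fst th `` {k v}) \<subseteq> carrier (quot A th)" using k' by (auto simp: quot_def quotientI)
      moreover have "\<forall>p\<in>set (fst q). holds (quot A th) (\<lambda>v. fst th `` {k v}) p"
        using p wp holds_quot[OF A c _ k'] by auto
      ultimately have "holds (quot A th) (\<lambda>v. fst th `` {k v}) (snd q)" using s by (auto simp: sat_qid_def)
      thus "ev A k (snd q) \<in> At th" using holds_quot[OF A c wc k'] by simp
    qed
  next
    assume R: "\<forall>k. range k \<subseteq> carrier A \<longrightarrow> (\<forall>p\<in>set (fst q). ev A k p \<in> At th) \<longrightarrow> ev A k (snd q) \<in> At th"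
    show "sat_qid (quot A th) q" unfolding sat_qid_def
    proof (intro allI impI)
      fix h assume h: "range h \<subseteq> carrier (quot A th)" and p: "\<forall>p\<in>set (fst q). holds (quot A th) h p"
      define k where "k v = (SOME x. x \<in> h v)" for v
      have hk: "h v = fst th `` {k v} \<and> k v \<in> carrier A" for v
      proof -
        have "h v \<in> carrier A // fst th" using h by (auto simp: quot_def)
        then obtain x where x: "h v = fst th `` {x}" "x \<in> carrier A" by (rule quotientE)
        have "x \<in> h v" using x equiv_class_self[OF eq] by simp
        hence "k v \<in> h v" unfolding k_def by (rule someI)
        hence "(x, k v) \<in> fst th" using x by simp
        thus ?thesis using x eq by (metis equiv_class_eq_iff)
      qed
      have hk': "h = (\<lambda>v. fst th `` {k v})" using hk by auto
      have k': "\<forall>v. k v \<in> carrier A" using hk by auto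
      have "\<forall>p\<in>set (fst q). ev A k p \<in> At th" using p wp holds_quot[OF A c _ k'] hk' by auto
      hence "ev A k (snd q) \<in> At th" using R k' by auto
      thus "holds (quot A th) h (snd q)" using holds_quot[OF A c wc k'] hk' by simp
    qed
  qed
qed

lemma ConK_iff:
  assumes A: "is_struc af ar A" and X: "\<forall>q\<in>X. wf_qid af ar q"
  shows "th \<in> ConK af ar X A \<longleftrightarrow> structS af ar A (At th) \<and> closedS X A (At th)"
proof
  assume "th \<in> ConK af ar X A"
  hence c: "is_cong af ar A th" and m: "model af ar X (quot A th)" by (auto simp: ConK_def)
  show "structS af ar A (At th) \<and> closedS X A (At th)"
    using c m sat_quot[OF A c] X by (auto simp: is_cong_structS model_def closedS_def)
next
  assume s: "structS af ar A (At th) \<and> closedS X A (At th)"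
  hence c: "is_cong af ar A th" by (simp add: is_cong_structS)
  have "model af ar X (quot A th)"
    using s quot_struc[OF A c] sat_quot[OF A c] X by (auto simp: model_def closedS_def)
  thus "th \<in> ConK af ar X A" using c by (simp add: ConK_def)
qed



lemma is_struc_D:
  assumes "is_struc af ar A"
  shows "carrier A \<noteq> {}"
    and "\<And>f xs. set xs \<subseteq> carrier A \<Longrightarrow> length xs = af f \<Longrightarrow> fnc A f xs \<in> carrier A"
    and "\<And>r xs. xs \<in> rel A r \<Longrightarrow> set xs \<subseteq> carrier A \<and> length xs = ar r"
proof -
  have abc: "carrier A \<noteq> {} \<and>
      (\<forall>f xs. set xs \<subseteq> carrier A \<and> length xs = af f \<longrightarrow> fnc A f xs \<in> carrier A) \<and>
      (\<forall>r. rel A r \<subseteq> {xs. set xs \<subseteq> carrier A \<and> length xs = ar r})"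
    using assms unfolding is_struc_def .
  show "carrier A \<noteq> {}" using abc by blast
  show "\<And>f xs. set xs \<subseteq> carrier A \<Longrightarrow> length xs = af f \<Longrightarrow> fnc A f xs \<in> carrier A"
    using abc by blast
  show "\<And>r xs. xs \<in> rel A r \<Longrightarrow> set xs \<subseteq> carrier A \<and> length xs = ar r"
  proof -
    fix r xs assume "xs \<in> rel A r"
    moreover have "rel A r \<subseteq> {xs. set xs \<subseteq> carrier A \<and> length xs = ar r}" using abc by blast
    ultimately show "set xs \<subseteq> carrier A \<and> length xs = ar r" by blast
  qed
qed

lemma is_hom_D:
  assumes "is_hom af A B h"
  shows "\<And>x. x \<in> carrier A \<Longrightarrow> h x \<in> carrier B"
    and "\<And>f xs. set xs \<subseteq> carrier A \<Longrightarrow> length xs = af f \<Longrightarrow> h (fnc A f xs) = fnc B f (map h xs)"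
    and "\<And>r xs. xs \<in> rel A r \<Longrightarrow> map h xs \<in> rel B r"
proof -
  have abc: "(\<forall>x\<in>carrier A. h x \<in> carrier B) \<and>
      (\<forall>f xs. set xs \<subseteq> carrier A \<and> length xs = af f \<longrightarrow> h (fnc A f xs) = fnc B f (map h xs)) \<and>
      (\<forall>r xs. xs \<in> rel A r \<longrightarrow> map h xs \<in> rel B r)"
    using assms unfolding is_hom_def .
  show "\<And>x. x \<in> carrier A \<Longrightarrow> h x \<in> carrier B" using abc by blast
  show "\<And>f xs. set xs \<subseteq> carrier A \<Longrightarrow> length xs = af f \<Longrightarrow> h (fnc A f xs) = fnc B f (map h xs)"
    using abc by blast
  show "\<And>r xs. xs \<in> rel A r \<Longrightarrow> map h xs \<in> rel B r" using abc by blast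
qed

lemma structS_D:
  assumes "structS af ar A D"
  shows "D \<subseteq> OV ar A"
    and "\<And>x. x\<in>carrier A \<Longrightarrow> FEq x x \<in> D"
    and "\<And>x y. FEq x y \<in> D \<Longrightarrow> FEq y x \<in> D"
    and "\<And>x y z. FEq x y \<in> D \<Longrightarrow> FEq y z \<in> D \<Longrightarrow> FEq x z \<in> D"
    and "\<And>f xs ys. length xs = af f \<Longrightarrow> list_all2 (\<lambda>x y. FEq x y \<in> D) xs ys \<Longrightarrow> FEq (fnc A f xs) (fnc A f ys) \<in> D"
    and "\<And>r xs. xs \<in> rel A r \<Longrightarrow> FRel r xs \<in> D"
    and "\<And>r xs ys. FRel r xs \<in> D \<Longrightarrow> list_all2 (\<lambda>x y. FEq x y \<in> D) xs ys \<Longrightarrow> FRel r ys \<in> D"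
  using assms unfolding structS_def by blast+

lemma structS_I:
  assumes "D \<subseteq> OV ar A"
    and "\<And>x. x\<in>carrier A \<Longrightarrow> FEq x x \<in> D"
    and "\<And>x y. FEq x y \<in> D \<Longrightarrow> FEq y x \<in> D"
    and "\<And>x y z. FEq x y \<in> D \<Longrightarrow> FEq y z \<in> D \<Longrightarrow> FEq x z \<in> D"
    and "\<And>f xs ys. length xs = af f \<Longrightarrow> list_all2 (\<lambda>x y. FEq x y \<in> D) xs ys \<Longrightarrow> FEq (fnc A f xs) (fnc A f ys) \<in> D"
    and "\<And>r xs. xs \<in> rel A r \<Longrightarrow> FRel r xs \<in> D"
    and "\<And>r xs ys. FRel r xs \<in> D \<Longrightarrow> list_all2 (\<lambda>x y. FEq x y \<in> D) xs ys \<Longrightarrow> FRel r ys \<in> D"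
  shows "structS af ar A D"
  unfolding structS_def using assms by blast

lemma closedS_D:
  assumes "closedS X A D" "q \<in> X" "range k \<subseteq> carrier A" "\<And>p. p \<in> set (fst q) \<Longrightarrow> ev A k p \<in> D"
  shows "ev A k (snd q) \<in> D"
  using assms unfolding closedS_def by blast

lemma closedS_Un: "closedS (X \<union> Y) A D \<longleftrightarrow> closedS X A D \<and> closedS Y A D"
  unfolding closedS_def by blast

lemma closedS_mono: "closedS Y A D \<Longrightarrow> X \<subseteq> Y \<Longrightarrow> closedS X A D"
  unfolding closedS_def by blast

lemma list_all2_OV:
  assumes "list_all2 (\<lambda>x y. FEq x y \<in> D) xs ys" "D \<subseteq> OV ar A"
  shows "set xs \<subseteq> carrier A" "set ys \<subseteq> carrier A" "length ys = length xs"
proof -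
  have "\<forall>(x,y)\<in>set (zip xs ys). FEq x y \<in> D" and len: "length xs = length ys"
    using assms(1) by (auto simp: list_all2_iff)
  hence z: "\<forall>(x,y)\<in>set (zip xs ys). x \<in> carrier A \<and> y \<in> carrier A" using assms(2) by fastforce
  show "set xs \<subseteq> carrier A"
  proof
    fix x assume "x \<in> set xs"
    then obtain i where i: "i < length xs" "x = xs ! i" by (auto simp: in_set_conv_nth)
    hence "(xs ! i, ys ! i) \<in> set (zip xs ys)" using len by (auto simp: in_set_zip)
    thus "x \<in> carrier A" using z i by blast
  qed
  show "set ys \<subseteq> carrier A"
  proof
    fix x assume "x \<in> set ys"
    then obtain i where i: "i < length ys" "x = ys ! i" by (auto simp: in_set_conv_nth)
    hence "(xs ! i, ys ! i) \<in> set (zip xs ys)" using len by (auto simp: in_set_zip)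
    thus "x \<in> carrier A" using z i by blast
  qed
  show "length ys = length xs" using len by simp
qed

lemma top_cong:
  assumes A: "is_struc af ar A" and X: "\<forall>q\<in>X. wf_qid af ar q"
  shows "structS af ar A (OV ar A) \<and> closedS X A (OV ar A)"
proof
  show "structS af ar A (OV ar A)"
  proof (rule structS_I)
    fix f xs ys assume l: "length xs = af f" and a: "list_all2 (\<lambda>x y. FEq x y \<in> OV ar A) xs ys"
    have o: "OV ar A \<subseteq> OV ar A" by (rule subset_refl)
    note L = list_all2_OV[OF a o]
    have "fnc A f xs \<in> carrier A" using is_struc_D(2)[OF A L(1) l] .
    moreover have "fnc A f ys \<in> carrier A" using is_struc_D(2)[OF A L(2)] L(3) l by simp
    ultimately show "FEq (fnc A f xs) (fnc A f ys) \<in> OV ar A" by simp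
  next
    fix r xs assume "xs \<in> rel A r" thus "FRel r xs \<in> OV ar A" using is_struc_D(3)[OF A] by simp
  next
    fix r xs ys assume a1: "FRel r xs \<in> OV ar A" and a: "list_all2 (\<lambda>x y. FEq x y \<in> OV ar A) xs ys"
    have o: "OV ar A \<subseteq> OV ar A" by (rule subset_refl)
    note L = list_all2_OV[OF a o]
    show "FRel r ys \<in> OV ar A" using L a1 by simp
  qed simp_all
  show "closedS X A (OV ar A)" unfolding closedS_def
  proof (intro ballI allI impI)
    fix q and k :: "nat \<Rightarrow> _" assume "q \<in> X" "range k \<subseteq> carrier A"
    have "wf_atom af ar (snd q)" using X \<open>q \<in> X\<close> by (simp add: wf_qid_def)
    moreover have "\<forall>v. k v \<in> carrier A" using \<open>range k \<subseteq> carrier A\<close> by auto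
    ultimately show "ev A k (snd q) \<in> OV ar A" by (rule ev_OV[OF A])
  qed
qed

lemma inter_cong:
  assumes ne: "\<D> \<noteq> {}" and all: "\<And>D. D \<in> \<D> \<Longrightarrow> structS af ar A D \<and> closedS X A D"
  shows "structS af ar A (\<Inter>\<D>) \<and> closedS X A (\<Inter>\<D>)"
proof
  have sD: "structS af ar A D" if "D \<in> \<D>" for D using all[OF that] by blast
  have cD: "closedS X A D" if "D \<in> \<D>" for D using all[OF that] by blast
  have la: "list_all2 (\<lambda>x y. FEq x y \<in> D) xs ys" if "list_all2 (\<lambda>x y. FEq x y \<in> \<Inter>\<D>) xs ys" "D \<in> \<D>" for xs ys D
    by (rule list_all2_mono[OF that(1)]) (use that(2) in blast)
  obtain D0 where D0: "D0 \<in> \<D>" using ne by blast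
  show "structS af ar A (\<Inter>\<D>)"
  proof (rule structS_I)
    show "\<Inter>\<D> \<subseteq> OV ar A" using Inter_lower[OF D0] structS_D(1)[OF sD[OF D0]] by (rule subset_trans)
  next
    fix x assume x: "x \<in> carrier A"
    show "FEq x x \<in> \<Inter>\<D>"
    proof (rule InterI)
      fix D assume "D \<in> \<D>" thus "FEq x x \<in> D" using structS_D(2)[OF sD x] by blast
    qed
  next
    fix x y assume a: "FEq x y \<in> \<Inter>\<D>"
    show "FEq y x \<in> \<Inter>\<D>"
    proof (rule InterI)
      fix D assume D: "D \<in> \<D>" thus "FEq y x \<in> D" using structS_D(3)[OF sD[OF D]] a by blast
    qed
  next
    fix x y z assume a: "FEq x y \<in> \<Inter>\<D>" "FEq y z \<in> \<Inter>\<D>"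
    show "FEq x z \<in> \<Inter>\<D>"
    proof (rule InterI)
      fix D assume D: "D \<in> \<D>" thus "FEq x z \<in> D" using structS_D(4)[OF sD[OF D]] a by blast
    qed
  next
    fix f xs ys assume l: "length xs = af f" and a: "list_all2 (\<lambda>x y. FEq x y \<in> \<Inter>\<D>) xs ys"
    show "FEq (fnc A f xs) (fnc A f ys) \<in> \<Inter>\<D>"
    proof (rule InterI)
      fix D assume D: "D \<in> \<D>" thus "FEq (fnc A f xs) (fnc A f ys) \<in> D" using structS_D(5)[OF sD[OF D] l la[OF a D]] by blast
    qed
  next
    fix r xs assume x: "xs \<in> rel A r"
    show "FRel r xs \<in> \<Inter>\<D>"
    proof (rule InterI)
      fix D assume D: "D \<in> \<D>" thus "FRel r xs \<in> D" using structS_D(6)[OF sD[OF D] x] by blast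
    qed
  next
    fix r xs ys assume a1: "FRel r xs \<in> \<Inter>\<D>" and a: "list_all2 (\<lambda>x y. FEq x y \<in> \<Inter>\<D>) xs ys"
    show "FRel r ys \<in> \<Inter>\<D>"
    proof (rule InterI)
      fix D assume D: "D \<in> \<D>"
      have "FRel r xs \<in> D" using a1 D by blast
      thus "FRel r ys \<in> D" using structS_D(7)[OF sD[OF D] _ la[OF a D]] by blast
    qed
  qed
  show "closedS X A (\<Inter>\<D>)" unfolding closedS_def
  proof (intro ballI allI impI InterI)
    fix q D and k :: "nat \<Rightarrow> _" assume q: "q \<in> X" and k: "range k \<subseteq> carrier A" and p: "\<forall>p\<in>set (fst q). ev A k p \<in> \<Inter>\<D>" and D: "D \<in> \<D>"
    have "\<And>p. p \<in> set (fst q) \<Longrightarrow> ev A k p \<in> D" using p D by blast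
    thus "ev A k (snd q) \<in> D" using closedS_D[OF cD[OF D] q k] by blast
  qed
qed

lemma dir_fin:
  assumes ne: "\<D> \<noteq> {}" and dir: "\<And>D1 D2. D1 \<in> \<D> \<Longrightarrow> D2 \<in> \<D> \<Longrightarrow> \<exists>D3\<in>\<D>. D1 \<union> D2 \<subseteq> D3"
    and fin: "finite W" and sub: "W \<subseteq> \<Union>\<D>"
  shows "\<exists>D\<in>\<D>. W \<subseteq> D"
  using fin sub
proof (induction W rule: finite_induct)
  case empty thus ?case using ne by blast
next
  case (insert w W)
  then obtain D1 where D1: "D1 \<in> \<D>" "W \<subseteq> D1" by blast
  obtain D2 where D2: "D2 \<in> \<D>" "w \<in> D2" using insert.prems by blast
  obtain D3 where "D3 \<in> \<D>" "D1 \<union> D2 \<subseteq> D3" using dir[OF D1(1) D2(1)] by blast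
  thus ?case using D1 D2 by blast
qed

lemma list_all2_dir:
  fixes \<D> :: "('a,'r) fatom set set"
  assumes ne: "\<D> \<noteq> {}" and dir: "\<And>D1 D2. D1 \<in> \<D> \<Longrightarrow> D2 \<in> \<D> \<Longrightarrow> \<exists>D3\<in>\<D>. D1 \<union> D2 \<subseteq> D3"
    and la: "list_all2 (\<lambda>x y. FEq x y \<in> \<Union>\<D>) xs ys" and extra: "finite W" "W \<subseteq> \<Union>\<D>"
  shows "\<exists>D\<in>\<D>. list_all2 (\<lambda>x y. FEq x y \<in> D) xs ys \<and> W \<subseteq> D"
proof -
  define V where "V = (\<lambda>(x,y). FEq x y :: ('a,'r) fatom) ` set (zip xs ys)"
  have "V \<subseteq> \<Union>\<D>" using la by (auto simp: V_def list_all2_iff)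
  moreover have "finite V" by (simp add: V_def)
  ultimately obtain D where D: "D \<in> \<D>" "V \<union> W \<subseteq> D" using dir_fin[OF ne dir, of "V \<union> W"] extra by auto
  have "list_all2 (\<lambda>x y. FEq x y \<in> D) xs ys"
    using la D(2) by (auto simp: V_def list_all2_iff)
  thus ?thesis using D by blast
qed

lemma union_cong:
  assumes ne: "\<D> \<noteq> {}" and dir: "\<And>D1 D2. D1 \<in> \<D> \<Longrightarrow> D2 \<in> \<D> \<Longrightarrow> \<exists>D3\<in>\<D>. D1 \<union> D2 \<subseteq> D3"
    and all: "\<And>D. D \<in> \<D> \<Longrightarrow> structS af ar A D \<and> closedS X A D"
  shows "structS af ar A (\<Union>\<D>) \<and> closedS X A (\<Union>\<D>)"
proof
  have sD: "structS af ar A D" if "D \<in> \<D>" for D using all[OF that] by blast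
  have cD: "closedS X A D" if "D \<in> \<D>" for D using all[OF that] by blast
  obtain D0 where D0: "D0 \<in> \<D>" using ne by blast
  show "structS af ar A (\<Union>\<D>)"
  proof (rule structS_I)
    show "\<Union>\<D> \<subseteq> OV ar A"
    proof (rule Union_least)
      fix D assume "D \<in> \<D>" thus "D \<subseteq> OV ar A" using structS_D(1)[OF sD] by blast
    qed
  next
    fix x assume "x \<in> carrier A"
    hence "FEq x x \<in> D0" using structS_D(2)[OF sD[OF D0]] by blast
    thus "FEq x x \<in> \<Union>\<D>" using D0 by blast
  next
    fix x y assume "FEq x y \<in> \<Union>\<D>"
    then obtain D where D: "D \<in> \<D>" "FEq x y \<in> D" by blast
    hence "FEq y x \<in> D" using structS_D(3)[OF sD[OF D(1)]] by blast
    thus "FEq y x \<in> \<Union>\<D>" using D by blast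
  next
    fix x y z assume a: "FEq x y \<in> \<Union>\<D>" "FEq y z \<in> \<Union>\<D>"
    have "finite {FEq x y, FEq y z}" by simp
    moreover have "{FEq x y, FEq y z} \<subseteq> \<Union>\<D>" using a by blast
    ultimately obtain D where D: "D \<in> \<D>" "{FEq x y, FEq y z} \<subseteq> D" using dir_fin[OF ne dir] by blast
    hence "FEq x z \<in> D" using structS_D(4)[OF sD[OF D(1)]] by blast
    thus "FEq x z \<in> \<Union>\<D>" using D by blast
  next
    fix f xs ys assume l: "length xs = af f" and a: "list_all2 (\<lambda>x y. FEq x y \<in> \<Union>\<D>) xs ys"
    obtain D where D: "D \<in> \<D>" "list_all2 (\<lambda>x y. FEq x y \<in> D) xs ys"
      using list_all2_dir[OF ne dir a, of "{}"] by blast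
    hence "FEq (fnc A f xs) (fnc A f ys) \<in> D" using structS_D(5)[OF sD[OF D(1)] l] by blast
    thus "FEq (fnc A f xs) (fnc A f ys) \<in> \<Union>\<D>" using D by blast
  next
    fix r xs assume "xs \<in> rel A r"
    hence "FRel r xs \<in> D0" using structS_D(6)[OF sD[OF D0]] by blast
    thus "FRel r xs \<in> \<Union>\<D>" using D0 by blast
  next
    fix r xs ys assume a1: "FRel r xs \<in> \<Union>\<D>" and a: "list_all2 (\<lambda>x y. FEq x y \<in> \<Union>\<D>) xs ys"
    have "finite {FRel r xs}" "{FRel r xs} \<subseteq> \<Union>\<D>" using a1 by auto
    then obtain D where D: "D \<in> \<D>" "list_all2 (\<lambda>x y. FEq x y \<in> D) xs ys \<and> {FRel r xs} \<subseteq> D"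
      using list_all2_dir[OF ne dir a] by blast
    hence "FRel r ys \<in> D" using structS_D(7)[OF sD[OF D(1)]] by blast
    thus "FRel r ys \<in> \<Union>\<D>" using D by blast
  qed
  show "closedS X A (\<Union>\<D>)" unfolding closedS_def
  proof (intro ballI allI impI)
    fix q and k :: "nat \<Rightarrow> _" assume q: "q \<in> X" and k: "range k \<subseteq> carrier A" and p: "\<forall>p\<in>set (fst q). ev A k p \<in> \<Union>\<D>"
    have "ev A k ` set (fst q) \<subseteq> \<Union>\<D>" using p by blast
    moreover have "finite (ev A k ` set (fst q))" by simp
    ultimately obtain D where D: "D \<in> \<D>" "ev A k ` set (fst q) \<subseteq> D" using dir_fin[OF ne dir] by blast
    have "\<And>p. p \<in> set (fst q) \<Longrightarrow> ev A k p \<in> D" using D(2) by blast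
    hence "ev A k (snd q) \<in> D" using closedS_D[OF cD[OF D(1)] q k] by blast
    thus "ev A k (snd q) \<in> \<Union>\<D>" using D by blast
  qed
qed

lemma eval_hom:
  assumes A: "is_struc af ar A" and h: "is_hom af A B g" and t: "wf_trm af t" and k: "\<forall>v. k v \<in> carrier A"
  shows "g (eval A k t) = eval B (\<lambda>v. g (k v)) t"
  using t
proof (induction t)
  case (Var v) thus ?case by simp
next
  case (Fn f ts)
  have s: "set (map (eval A k) ts) \<subseteq> carrier A" using Fn eval_in[OF A _ k] by auto
  have l: "length (map (eval A k) ts) = af f" using Fn by simp
  have "g (eval A k (Fn f ts)) = fnc B f (map g (map (eval A k) ts))"
    using is_hom_D(2)[OF h s l] by simp
  also have "map g (map (eval A k) ts) = map (eval B (\<lambda>v. g (k v))) ts"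
    unfolding map_map by (rule map_cong[OF refl]) (use Fn in auto)
  finally show ?case by simp
qed

lemma ev_hom:
  assumes A: "is_struc af ar A" and h: "is_hom af A B g" and a: "wf_atom af ar a" and k: "\<forall>v. k v \<in> carrier A"
  shows "fatom_map g (ev A k a) = ev B (\<lambda>v. g (k v)) a"
proof (cases a)
  case (Eq s t) thus ?thesis using a eval_hom[OF A h _ k] by simp
next
  case (Rel r ts)
  have "map g (map (eval A k) ts) = map (eval B (\<lambda>v. g (k v))) ts"
    unfolding map_map by (rule map_cong[OF refl]) (use a Rel eval_hom[OF A h _ k] in auto)
  thus ?thesis using Rel by simp
qed

lemma fatom_map_OV:
  assumes h: "is_hom af A B g" and "al \<in> OV ar A"
  shows "fatom_map g al \<in> OV ar B"
  using assms(2) is_hom_D(1)[OF h] by (cases al) auto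

lemma pullback_cong:
  assumes A: "is_struc af ar A" and B: "is_struc af ar B" and h: "is_hom af A B g"
    and X: "\<forall>q\<in>X. wf_qid af ar q" and D: "structS af ar B D \<and> closedS X B D"
  shows "structS af ar A {al \<in> OV ar A. fatom_map g al \<in> D} \<and> closedS X A {al \<in> OV ar A. fatom_map g al \<in> D}"
    (is "structS af ar A ?D \<and> closedS X A ?D")
proof
  have sD: "structS af ar B D" using D by blast
  have la: "list_all2 (\<lambda>x y. FEq x y \<in> D) (map g xs) (map g ys)" if "list_all2 (\<lambda>x y. FEq x y \<in> ?D) xs ys" for xs ys
    using that by (auto simp: list_all2_map1 list_all2_map2 elim: list_all2_mono)
  have sub: "?D \<subseteq> OV ar A" by blast
  show "structS af ar A ?D"
  proof (rule structS_I)
    show "?D \<subseteq> OV ar A" by blast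
  next
    fix x assume "x \<in> carrier A" thus "FEq x x \<in> ?D" using structS_D(2)[OF sD] is_hom_D(1)[OF h] by simp
  next
    fix x y assume "FEq x y \<in> ?D" thus "FEq y x \<in> ?D" using structS_D(3)[OF sD] by simp
  next
    fix x y z assume "FEq x y \<in> ?D" "FEq y z \<in> ?D" thus "FEq x z \<in> ?D" using structS_D(4)[OF sD] by (simp, blast)
  next
    fix f xs ys assume l: "length xs = af f" and a: "list_all2 (\<lambda>x y. FEq x y \<in> ?D) xs ys"
    have xs: "set xs \<subseteq> carrier A" and ys: "set ys \<subseteq> carrier A" and ly: "length ys = af f"
      using list_all2_OV[OF a sub] l by auto
    have "FEq (fnc B f (map g xs)) (fnc B f (map g ys)) \<in> D" using structS_D(5)[OF sD _ la[OF a]] l by simp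
    moreover have "g (fnc A f xs) = fnc B f (map g xs)" using is_hom_D(2)[OF h xs l] .
    moreover have "g (fnc A f ys) = fnc B f (map g ys)" using is_hom_D(2)[OF h ys ly] .
    moreover have "fnc A f xs \<in> carrier A" "fnc A f ys \<in> carrier A"
      using is_struc_D(2)[OF A] xs ys l ly by auto
    ultimately show "FEq (fnc A f xs) (fnc A f ys) \<in> ?D" by simp
  next
    fix r xs assume "xs \<in> rel A r"
    thus "FRel r xs \<in> ?D" using is_struc_D(3)[OF A] structS_D(6)[OF sD] is_hom_D(3)[OF h] by simp
  next
    fix r xs ys assume a1: "FRel r xs \<in> ?D" and a: "list_all2 (\<lambda>x y. FEq x y \<in> ?D) xs ys"
    have ys: "set ys \<subseteq> carrier A" and ly: "length ys = length xs" using list_all2_OV[OF a sub] by auto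
    have "FRel r (map g ys) \<in> D" using structS_D(7)[OF sD _ la[OF a]] a1 by simp
    thus "FRel r ys \<in> ?D" using ys ly a1 by simp
  qed
  show "closedS X A ?D" unfolding closedS_def
  proof (intro ballI allI impI)
    fix q and k :: "nat \<Rightarrow> _" assume q: "q \<in> X" and k: "range k \<subseteq> carrier A" and p: "\<forall>p\<in>set (fst q). ev A k p \<in> ?D"
    have k': "\<forall>v. k v \<in> carrier A" using k by auto
    have wq: "\<forall>p\<in>set (fst q). wf_atom af ar p" "wf_atom af ar (snd q)" using X q by (auto simp: wf_qid_def)
    have gk: "range (\<lambda>v. g (k v)) \<subseteq> carrier B" using k' is_hom_D(1)[OF h] by auto
    have "ev B (\<lambda>v. g (k v)) p \<in> D" if "p \<in> set (fst q)" for p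
      using p that ev_hom[OF A h _ k'] wq by fastforce
    hence "ev B (\<lambda>v. g (k v)) (snd q) \<in> D" using closedS_D[of X B D q "\<lambda>v. g (k v)"] D q gk by blast
    thus "ev A k (snd q) \<in> ?D" using ev_hom[OF A h wq(2) k'] ev_OV[OF A wq(2) k'] by simp
  qed
qed

definition Tr :: "('a,'f,'r) struc \<Rightarrow> ('a,'r) fatom set" where
  "Tr B = {FEq x x | x. x \<in> carrier B} \<union> {FRel r xs | r xs. xs \<in> rel B r}"

lemma Tr_simps[simp]:
  "FEq x y \<in> Tr B \<longleftrightarrow> x = y \<and> x \<in> carrier B"
  "FRel r xs \<in> Tr B \<longleftrightarrow> xs \<in> rel B r"
  by (auto simp: Tr_def)

lemma holds_Tr:
  assumes B: "is_struc af ar B" and a: "wf_atom af ar a" and k: "\<forall>v. k v \<in> carrier B"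
  shows "holds B k a \<longleftrightarrow> ev B k a \<in> Tr B"
  using a eval_in[OF B _ k] by (cases a) auto

lemma Tr_cong:
  assumes B: "is_struc af ar B" and X: "\<forall>q\<in>X. wf_qid af ar q" and m: "\<forall>q\<in>X. sat_qid B q"
  shows "structS af ar B (Tr B) \<and> closedS X B (Tr B)"
proof
  show "structS af ar B (Tr B)"
  proof (rule structS_I)
    show "Tr B \<subseteq> OV ar B"
    proof
      fix al assume "al \<in> Tr B" thus "al \<in> OV ar B" using is_struc_D(3)[OF B] by (cases al) auto
    qed
  next
    fix f xs ys assume l: "length xs = af f" and a: "list_all2 (\<lambda>x y. FEq x y \<in> Tr B) xs ys"
    have "xs = ys" using a by (induction rule: list_all2_induct) auto
    moreover have "set xs \<subseteq> carrier B" using a by (induction rule: list_all2_induct) auto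
    ultimately show "FEq (fnc B f xs) (fnc B f ys) \<in> Tr B" using is_struc_D(2)[OF B] l by simp
  next
    fix r xs ys assume "FRel r xs \<in> Tr B" "list_all2 (\<lambda>x y. FEq x y \<in> Tr B) xs ys"
    moreover have "xs = ys" using \<open>list_all2 _ xs ys\<close> by (induction rule: list_all2_induct) auto
    ultimately show "FRel r ys \<in> Tr B" by simp
  qed auto
  show "closedS X B (Tr B)" unfolding closedS_def
  proof (intro ballI allI impI)
    fix q and k :: "nat \<Rightarrow> _" assume q: "q \<in> X" and k: "range k \<subseteq> carrier B" and p: "\<forall>p\<in>set (fst q). ev B k p \<in> Tr B"
    have k': "\<forall>v. k v \<in> carrier B" using k by auto
    have wq: "\<forall>p\<in>set (fst q). wf_atom af ar p" "wf_atom af ar (snd q)" using X q by (auto simp: wf_qid_def)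
    have "\<forall>p\<in>set (fst q). holds B k p" using p wq holds_Tr[OF B _ k'] by blast
    hence "holds B k (snd q)" using m q k by (auto simp: sat_qid_def)
    thus "ev B k (snd q) \<in> Tr B" using holds_Tr[OF B wq(2) k'] by simp
  qed
qed



definition imgS :: "('a \<Rightarrow> 'b) \<Rightarrow> ('a,'f,'r) struc \<Rightarrow> ('b,'f,'r) struc" where
  "imgS g A = \<lparr> carrier = g ` carrier A,
     fnc = (\<lambda>f ys. g (fnc A f (map (inv_into (carrier A) g) ys))),
     rel = (\<lambda>r. map g ` rel A r) \<rparr>"

lemma img_simps[simp]:
  "carrier (imgS g A) = g ` carrier A"
  "fnc (imgS g A) f ys = g (fnc A f (map (inv_into (carrier A) g) ys))"
  "rel (imgS g A) r = map g ` rel A r"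
  by (simp_all add: imgS_def)

lemma img_struc:
  assumes A: "is_struc af ar A" and inj: "inj_on g (carrier A)"
  shows "is_struc af ar (imgS g A)"
proof -
  have "carrier (imgS g A) \<noteq> {}" using is_struc_D(1)[OF A] by simp
  moreover have "fnc (imgS g A) f ys \<in> carrier (imgS g A)"
    if "set ys \<subseteq> carrier (imgS g A)" "length ys = af f" for f ys
  proof -
    have "set (map (inv_into (carrier A) g) ys) \<subseteq> carrier A"
      using that(1) by (auto intro: inv_into_into)
    hence "fnc A f (map (inv_into (carrier A) g) ys) \<in> carrier A" using is_struc_D(2)[OF A] that(2) by simp
    thus ?thesis by simp
  qed
  moreover have "rel (imgS g A) r \<subseteq> {xs. set xs \<subseteq> carrier (imgS g A) \<and> length xs = ar r}" for r
  proof
    fix ys assume "ys \<in> rel (imgS g A) r"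
    then obtain xs where "xs \<in> rel A r" "ys = map g xs" by auto
    thus "ys \<in> {xs. set xs \<subseteq> carrier (imgS g A) \<and> length xs = ar r}" using is_struc_D(3)[OF A] by auto
  qed
  ultimately show ?thesis unfolding is_struc_def by blast
qed

lemma img_eval:
  assumes A: "is_struc af ar A" and inj: "inj_on g (carrier A)" and t: "wf_trm af t" and k: "\<forall>v. k v \<in> carrier A"
  shows "eval (imgS g A) (\<lambda>v. g (k v)) t = g (eval A k t)"
  using t
proof (induction t)
  case (Var v) thus ?case by simp
next
  case (Fn f ts)
  have "map (eval (imgS g A) (\<lambda>v. g (k v))) ts = map g (map (eval A k) ts)"
    unfolding map_map by (rule map_cong[OF refl]) (use Fn in auto)
  moreover have "map (inv_into (carrier A) g) (map g (map (eval A k) ts)) = map (eval A k) ts"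
    unfolding map_map
  proof (rule map_cong[OF refl])
    fix t assume "t \<in> set ts"
    hence "eval A k t \<in> carrier A" using Fn eval_in[OF A _ k] by auto
    thus "(inv_into (carrier A) g \<circ> (g \<circ> eval A k)) t = eval A k t" using inv_into_f_f[OF inj] by simp
  qed
  ultimately show ?case by (simp only: eval.simps img_simps)
qed

lemma img_holds:
  assumes A: "is_struc af ar A" and inj: "inj_on g (carrier A)" and a: "wf_atom af ar a" and k: "\<forall>v. k v \<in> carrier A"
  shows "holds (imgS g A) (\<lambda>v. g (k v)) a \<longleftrightarrow> holds A k a"
proof (cases a)
  case (Eq s t)
  have s: "wf_trm af s" and t: "wf_trm af t" using a Eq by auto
  have "g (eval A k s) = g (eval A k t) \<longleftrightarrow> eval A k s = eval A k t"
    using inj_on_eq_iff[OF inj eval_in[OF A s k] eval_in[OF A t k]] .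
  thus ?thesis using Eq img_eval[OF A inj s k] img_eval[OF A inj t k] by simp
next
  case (Rel r ts)
  have w: "\<forall>t\<in>set ts. wf_trm af t" using a Rel by auto
  have m: "map (eval (imgS g A) (\<lambda>v. g (k v))) ts = map g (map (eval A k) ts)"
    unfolding map_map by (rule map_cong[OF refl]) (use w img_eval[OF A inj _ k] in auto)
  have c: "set (map (eval A k) ts) \<subseteq> carrier A" using w eval_in[OF A _ k] by auto
  have "map g (map (eval A k) ts) \<in> map g ` rel A r \<longleftrightarrow> map (eval A k) ts \<in> rel A r"
  proof
    assume "map g (map (eval A k) ts) \<in> map g ` rel A r"
    then obtain xs where xs: "xs \<in> rel A r" "map g (map (eval A k) ts) = map g xs" by auto
    have "set xs \<subseteq> carrier A" using is_struc_D(3)[OF A xs(1)] by blast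
    hence "inj_on g (set (map (eval A k) ts) \<union> set xs)" using c inj by (meson Un_least inj_on_subset)
    hence "map (eval A k) ts = xs" using xs(2) inj_on_map_eq_map by blast
    thus "map (eval A k) ts \<in> rel A r" using xs(1) by simp
  next
    assume "map (eval A k) ts \<in> rel A r"
    thus "map g (map (eval A k) ts) \<in> map g ` rel A r" by (rule imageI)
  qed
  thus ?thesis using Rel m by (simp only: holds.simps img_simps)
qed

lemma img_sat:
  assumes A: "is_struc af ar A" and inj: "inj_on g (carrier A)" and q: "wf_qid af ar q"
  shows "sat_qid (imgS g A) q \<longleftrightarrow> sat_qid A q"
proof -
  have wp: "\<forall>p\<in>set (fst q). wf_atom af ar p" and wc: "wf_atom af ar (snd q)" using q by (auto simp: wf_qid_def)
  show ?thesis
  proof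
    assume s: "sat_qid (imgS g A) q"
    show "sat_qid A q" unfolding sat_qid_def
    proof (intro allI impI)
      fix k assume k: "range k \<subseteq> carrier A" and p: "\<forall>p\<in>set (fst q). holds A k p"
      have k': "\<forall>v. k v \<in> carrier A" using k by auto
      have "range (\<lambda>v. g (k v)) \<subseteq> carrier (imgS g A)" using k' by auto
      moreover have "\<forall>p\<in>set (fst q). holds (imgS g A) (\<lambda>v. g (k v)) p" using p wp img_holds[OF A inj _ k'] by blast
      ultimately have "holds (imgS g A) (\<lambda>v. g (k v)) (snd q)" using s unfolding sat_qid_def by blast
      thus "holds A k (snd q)" using img_holds[OF A inj wc k'] by blast
    qed
  next
    assume s: "sat_qid A q"
    show "sat_qid (imgS g A) q" unfolding sat_qid_def
    proof (intro allI impI)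
      fix h assume h: "range h \<subseteq> carrier (imgS g A)" and p: "\<forall>p\<in>set (fst q). holds (imgS g A) h p"
      define k where "k v = inv_into (carrier A) g (h v)" for v
      have k': "\<forall>v. k v \<in> carrier A"
      proof
        fix v have "h v \<in> g ` carrier A" using h by auto
        thus "k v \<in> carrier A" unfolding k_def by (rule inv_into_into)
      qed
      have hk: "h = (\<lambda>v. g (k v))"
      proof
        fix v have "h v \<in> g ` carrier A" using h by auto
        thus "h v = g (k v)" unfolding k_def by (rule f_inv_into_f[symmetric])
      qed
      have "\<forall>p\<in>set (fst q). holds A k p" using p wp img_holds[OF A inj _ k'] hk by blast
      moreover have "range k \<subseteq> carrier A" using k' by auto
      ultimately have "holds A k (snd q)" using s unfolding sat_qid_def by blast
      thus "holds (imgS g A) h (snd q)" using img_holds[OF A inj wc k'] hk by blast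
    qed
  qed
qed

lemma img_model:
  assumes A: "is_struc af ar A" and inj: "inj_on g (carrier A)" and X: "\<forall>q\<in>X. wf_qid af ar q"
  shows "model af ar X (imgS g A) \<longleftrightarrow> model af ar X A"
  using img_sat[OF A inj] X img_struc[OF A inj] A unfolding model_def by blast

fun subst :: "('v \<Rightarrow> ('f,'w) trm) \<Rightarrow> ('f,'v) trm \<Rightarrow> ('f,'w) trm" where
  "subst \<sigma> (Var v) = \<sigma> v"
| "subst \<sigma> (Fn f ts) = Fn f (map (subst \<sigma>) ts)"

fun substA :: "('v \<Rightarrow> ('f,'w) trm) \<Rightarrow> ('f,'r,'v) atom \<Rightarrow> ('f,'r,'w) atom" where
  "substA \<sigma> (Eq s t) = Eq (subst \<sigma> s) (subst \<sigma> t)"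
| "substA \<sigma> (Rel r ts) = Rel r (map (subst \<sigma>) ts)"

lemma eval_subst: "eval A h (subst \<sigma> t) = eval A (\<lambda>v. eval A h (\<sigma> v)) t"
proof (induction t)
  case (Fn f ts)
  have "map (eval A h) (map (subst \<sigma>) ts) = map (eval A (\<lambda>v. eval A h (\<sigma> v))) ts"
    unfolding map_map by (rule map_cong[OF refl]) (use Fn in auto)
  thus ?case by (simp only: eval.simps subst.simps)
qed simp

lemma holds_subst: "holds A h (substA \<sigma> a) \<longleftrightarrow> holds A (\<lambda>v. eval A h (\<sigma> v)) a"
proof (cases a)
  case (Rel r ts)
  have "map (eval A h) (map (subst \<sigma>) ts) = map (eval A (\<lambda>v. eval A h (\<sigma> v))) ts"
    unfolding map_map by (rule map_cong[OF refl]) (simp add: eval_subst)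
  thus ?thesis using Rel by (simp only: holds.simps substA.simps)
qed (simp add: eval_subst)

lemma wf_subst: "wf_trm af t \<Longrightarrow> (\<forall>v\<in>tvars t. wf_trm af (\<sigma> v)) \<Longrightarrow> wf_trm af (subst \<sigma> t)"
  by (induction t) auto

lemma tvars_subst: "tvars (subst \<sigma> t) = (\<Union>v\<in>tvars t. tvars (\<sigma> v))"
  by (induction t) auto

lemma subst_id: "(\<forall>v\<in>tvars t. \<sigma> v = Var v) \<Longrightarrow> subst \<sigma> t = t"
proof (induction t)
  case (Fn f ts)
  have "map (subst \<sigma>) ts = ts" by (rule map_idI) (use Fn in auto)
  thus ?case by simp
qed simp

lemma wf_substA: "wf_atom af ar a \<Longrightarrow> (\<forall>v\<in>avars a. wf_trm af (\<sigma> v)) \<Longrightarrow> wf_atom af ar (substA \<sigma> a)"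
  by (cases a) (auto intro: wf_subst)

lemma avars_substA: "avars (substA \<sigma> a) = (\<Union>v\<in>avars a. tvars (\<sigma> v))"
  by (cases a) (auto simp: tvars_subst)

lemma substA_id: "(\<forall>v\<in>avars a. \<sigma> v = Var v) \<Longrightarrow> substA \<sigma> a = a"
proof (cases a)
  case (Rel r ts)
  moreover assume "\<forall>v\<in>avars a. \<sigma> v = Var v"
  ultimately have "map (subst \<sigma>) ts = ts" by (intro map_idI subst_id) auto
  thus ?thesis using Rel by simp
qed (auto simp: subst_id)

lemma finite_tvars: "finite (tvars t)"
  by (induction t) auto

lemma finite_avars: "finite (avars a)"
  by (cases a) (auto simp: finite_tvars)

lemma finite_qvars: "finite (qvars q)"
  by (auto simp: qvars_def finite_avars)



locale FS =
  fixes af :: "'f \<Rightarrow> nat" and ar :: "'r \<Rightarrow> nat" and Sig :: "('f,'r) qid set" and n :: nat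
  assumes wfSig: "\<forall>q\<in>Sig. wf_qid af ar q" and npos: "n \<ge> 1"
begin

abbreviation "F \<equiv> Free af ar Sig n"
abbreviation "fc \<equiv> fcls af ar Sig n"
abbreviation "TT \<equiv> Tn af n"

definition valid :: "('f,'r,nat) atom \<Rightarrow> bool" where
  "valid a \<longleftrightarrow> ([], a) \<in> Cn af ar Sig"

lemma valid_iff: "valid a \<longleftrightarrow> wf_atom af ar a \<and>
   (\<forall>A :: (('f,nat) trm set,'f,'r) struc. model af ar Sig A \<longrightarrow> (\<forall>h. range h \<subseteq> carrier A \<longrightarrow> holds A h a))"
  by (simp add: valid_def Cn_def wf_qid_def sat_qid_def)

lemma validD: "valid a \<Longrightarrow> model af ar Sig (A :: (('f,nat) trm set,'f,'r) struc) \<Longrightarrow> range h \<subseteq> carrier A \<Longrightarrow> holds A h a"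
  using valid_iff by blast

lemma modelD: "model af ar X A \<Longrightarrow> is_struc af ar A"  "model af ar X A \<Longrightarrow> q \<in> X \<Longrightarrow> sat_qid A q"
  by (auto simp: model_def)

lemma TT_iff: "t \<in> TT \<longleftrightarrow> wf_trm af t \<and> tvars t \<subseteq> {..<n}"
  by (simp add: Tn_def)

lemma set_TT: "set ts \<subseteq> TT \<longleftrightarrow> (\<forall>t\<in>set ts. wf_trm af t) \<and> (\<forall>t\<in>set ts. tvars t \<subseteq> {..<n})"
  unfolding subset_iff TT_iff by auto

lemma Fn_TT: "Fn f ts \<in> TT \<longleftrightarrow> length ts = af f \<and> set ts \<subseteq> TT"
  unfolding set_TT by (simp add: TT_iff UN_subset_iff)

lemma fc_iff: "s \<in> fc t \<longleftrightarrow> s \<in> TT \<and> valid (Eq s t)"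
  by (simp add: fcls_def valid_def)

lemma fc_sub: "fc t \<subseteq> TT" by (auto simp: fc_iff)

lemma fc_sem:
  assumes "s \<in> fc t" "model af ar Sig (A :: (('f,nat) trm set,'f,'r) struc)" "range h \<subseteq> carrier A"
  shows "eval A h s = eval A h t"
  using validD[of "Eq s t" A h] assms fc_iff by auto

lemma fc_self: "t \<in> TT \<Longrightarrow> t \<in> fc t"
  by (auto simp: fc_iff valid_iff TT_iff)

lemma fc_eq:
  assumes "s \<in> fc t" "t \<in> TT"
  shows "fc s = fc t"
proof -
  have sT: "s \<in> TT" using assms fc_iff by blast
  have e: "eval A h s = eval A h t" if "model af ar Sig A" "range h \<subseteq> carrier A" for A :: "(('f,nat) trm set,'f,'r) struc" and h
    using fc_sem[OF assms(1) that] .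
  show ?thesis
  proof (intro set_eqI iffI)
    fix u assume "u \<in> fc s"
    hence "u \<in> TT" "valid (Eq u s)" by (auto simp: fc_iff)
    thus "u \<in> fc t" using e assms(2) by (auto simp: fc_iff valid_iff TT_iff)
  next
    fix u assume "u \<in> fc t"
    hence "u \<in> TT" "valid (Eq u t)" by (auto simp: fc_iff)
    thus "u \<in> fc s" using e sT by (auto simp: fc_iff valid_iff TT_iff)
  qed
qed

lemma fc_eq_iff:
  assumes "s \<in> TT" "t \<in> TT"
  shows "fc s = fc t \<longleftrightarrow> s \<in> fc t"
  using fc_eq[OF _ assms(2)] fc_self[OF assms(1)] by blast

lemma carrier_F: "carrier F = fc ` TT" by (simp add: Free_def)

lemma rep_F:
  assumes "X \<in> carrier F"
  shows "(SOME u. u \<in> X) \<in> TT" "fc (SOME u. u \<in> X) = X"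
proof -
  obtain t where t: "t \<in> TT" "X = fc t" using assms carrier_F by auto
  hence "t \<in> X" using fc_self by simp
  hence u: "(SOME u. u \<in> X) \<in> X" by (rule someI)
  thus "(SOME u. u \<in> X) \<in> TT" using t fc_sub by blast
  show "fc (SOME u. u \<in> X) = X" using fc_eq u t by simp
qed

lemma fc_Fn:
  assumes l: "length ts = af f" and ts: "set ts \<subseteq> TT" and la: "list_all2 (\<lambda>u t. u \<in> fc t) us ts"
  shows "fc (Fn f us) = fc (Fn f ts)"
proof -
  have lu: "length us = length ts" using la by (rule list_all2_lengthD)
  have usT: "set us \<subseteq> TT"
  proof
    fix u assume "u \<in> set us"
    then obtain i where i: "i < length us" "u = us ! i" by (auto simp: in_set_conv_nth)
    have "us ! i \<in> fc (ts ! i)" using la i(1) by (simp add: list_all2_conv_all_nth)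
    thus "u \<in> TT" using i fc_sub by blast
  qed
  have T1: "Fn f us \<in> TT" using usT lu l Fn_TT by simp
  have T2: "Fn f ts \<in> TT" using ts l Fn_TT by simp
  have "valid (Eq (Fn f us) (Fn f ts))" unfolding valid_iff
  proof (intro conjI allI impI)
    show "wf_atom af ar (Eq (Fn f us) (Fn f ts))" using T1 T2 by (simp add: TT_iff)
  next
    fix A :: "(('f,nat) trm set,'f,'r) struc" and h :: "nat \<Rightarrow> _" assume m: "model af ar Sig A" and h: "range h \<subseteq> carrier A"
    have "map (eval A h) us = map (eval A h) ts"
    proof (rule nth_equalityI)
      fix i assume "i < length (map (eval A h) us)"
      hence i: "i < length us" by simp
      have "us ! i \<in> fc (ts ! i)" using la i by (simp add: list_all2_conv_all_nth)
      thus "map (eval A h) us ! i = map (eval A h) ts ! i" using fc_sem[OF _ m h] i lu by simp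
    qed (simp add: lu)
    thus "holds A h (Eq (Fn f us) (Fn f ts))" by (simp only: holds.simps eval.simps)
  qed
  hence "Fn f us \<in> fc (Fn f ts)" using T1 fc_iff by blast
  thus ?thesis using fc_eq T2 by blast
qed

lemma subst_TT: "t \<in> TT \<Longrightarrow> (\<forall>v. \<sigma> v \<in> TT) \<Longrightarrow> subst \<sigma> t \<in> TT"
  unfolding TT_iff using wf_subst[of af t \<sigma>] tvars_subst[of \<sigma> t] by blast

lemma subst_TT': "wf_trm af t \<Longrightarrow> (\<forall>v. \<sigma> v \<in> TT) \<Longrightarrow> subst \<sigma> t \<in> TT"
  unfolding TT_iff using wf_subst[of af t \<sigma>] tvars_subst[of \<sigma> t] by blast

lemma F_eval:
  assumes s: "\<forall>v. \<sigma> v \<in> TT" and t: "wf_trm af t"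
  shows "eval F (\<lambda>v. fc (\<sigma> v)) t = fc (subst \<sigma> t)"
  using t
proof (induction t)
  case (Var v) thus ?case by simp
next
  case (Fn f ts)
  have m: "map (eval F (\<lambda>v. fc (\<sigma> v))) ts = map (\<lambda>t. fc (subst \<sigma> t)) ts"
    by (rule map_cong[OF refl]) (use Fn in auto)
  define us where "us = map (\<lambda>t. SOME u. u \<in> fc (subst \<sigma> t)) ts"
  have tsT: "set (map (subst \<sigma>) ts) \<subseteq> TT" using Fn subst_TT'[OF _ s] by auto
  have la: "list_all2 (\<lambda>u t. u \<in> fc t) us (map (subst \<sigma>) ts)"
    unfolding list_all2_conv_all_nth
  proof (intro conjI allI impI)
    fix i assume "i < length us"
    hence i: "i < length ts" by (simp add: us_def)
    have "subst \<sigma> (ts ! i) \<in> TT" using tsT i by auto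
    hence "subst \<sigma> (ts ! i) \<in> fc (subst \<sigma> (ts ! i))" by (rule fc_self)
    hence "(SOME u. u \<in> fc (subst \<sigma> (ts ! i))) \<in> fc (subst \<sigma> (ts ! i))" by (rule someI)
    thus "us ! i \<in> fc (map (subst \<sigma>) ts ! i)" using i by (simp add: us_def)
  qed (simp add: us_def)
  have "eval F (\<lambda>v. fc (\<sigma> v)) (Fn f ts) = fnc F f (map (\<lambda>t. fc (subst \<sigma> t)) ts)"
    using m by (simp only: eval.simps)
  also have "\<dots> = fc (Fn f us)" by (simp add: Free_def us_def o_def)
  also have "\<dots> = fc (Fn f (map (subst \<sigma>) ts))"
    by (rule fc_Fn[OF _ tsT la]) (use Fn in simp)
  finally show ?case by simp
qed

lemma F_struc: "is_struc af ar F"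
proof -
  have "Var 0 \<in> TT" using npos by (simp add: TT_iff)
  hence "carrier F \<noteq> {}" using carrier_F by auto
  moreover have "fnc F f Xs \<in> carrier F" if "set Xs \<subseteq> carrier F" "length Xs = af f" for f Xs
  proof -
    have "set (map (\<lambda>X. SOME u. u \<in> X) Xs) \<subseteq> TT" using that(1) rep_F(1) by auto
    hence "Fn f (map (\<lambda>X. SOME u. u \<in> X) Xs) \<in> TT" using that(2) Fn_TT by simp
    thus ?thesis by (simp add: Free_def)
  qed
  moreover have "rel F r \<subseteq> {xs. set xs \<subseteq> carrier F \<and> length xs = ar r}" for r
    by (fastforce simp: Free_def)
  ultimately show ?thesis unfolding is_struc_def by blast
qed

lemma HF:
  assumes s: "\<forall>v. \<sigma> v \<in> TT" and a: "wf_atom af ar a"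
  shows "holds F (\<lambda>v. fc (\<sigma> v)) a \<longleftrightarrow> valid (substA \<sigma> a)"
proof (cases a)
  case (Eq s' t')
  have T: "subst \<sigma> s' \<in> TT" "subst \<sigma> t' \<in> TT" using a Eq subst_TT'[OF _ s] by auto
  have "holds F (\<lambda>v. fc (\<sigma> v)) a \<longleftrightarrow> fc (subst \<sigma> s') = fc (subst \<sigma> t')"
    using Eq a F_eval[OF s] by simp
  also have "\<dots> \<longleftrightarrow> subst \<sigma> s' \<in> fc (subst \<sigma> t')" using fc_eq_iff[OF T] .
  also have "\<dots> \<longleftrightarrow> valid (substA \<sigma> a)" using Eq T fc_iff by simp
  finally show ?thesis .
next
  case (Rel r ts)
  have w: "\<forall>t\<in>set ts. wf_trm af t" and l: "length ts = ar r" using a Rel by auto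
  have T: "set (map (subst \<sigma>) ts) \<subseteq> TT" using w subst_TT'[OF _ s] by auto
  have m: "map (eval F (\<lambda>v. fc (\<sigma> v))) ts = map fc (map (subst \<sigma>) ts)"
    unfolding map_map by (rule map_cong[OF refl]) (use w F_eval[OF s] in auto)
  have "map fc (map (subst \<sigma>) ts) \<in> rel F r \<longleftrightarrow> valid (Rel r (map (subst \<sigma>) ts))"
  proof
    assume "map fc (map (subst \<sigma>) ts) \<in> rel F r"
    then obtain us where us: "map fc (map (subst \<sigma>) ts) = map fc us" "set us \<subseteq> TT" "length us = ar r"
        "valid (Rel r us)"
      by (auto simp: Free_def valid_def)
    have lu: "length us = length ts" using us(3) l by simp
    show "valid (Rel r (map (subst \<sigma>) ts))" unfolding valid_iff
    proof (intro conjI allI impI)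
      show "wf_atom af ar (Rel r (map (subst \<sigma>) ts))" using T l by (auto simp: TT_iff)
    next
      fix A :: "(('f,nat) trm set,'f,'r) struc" and h :: "nat \<Rightarrow> _" assume m: "model af ar Sig A" and h: "range h \<subseteq> carrier A"
      have "map (eval A h) us = map (eval A h) (map (subst \<sigma>) ts)"
      proof (rule nth_equalityI)
        fix i assume "i < length (map (eval A h) us)"
        hence i: "i < length us" by simp
        have uT: "us ! i \<in> TT" using us(2) i by auto
        have tT: "map (subst \<sigma>) ts ! i \<in> TT" using T i lu by auto
        have "fc (us ! i) = fc (map (subst \<sigma>) ts ! i)"
          using arg_cong[OF us(1), of "\<lambda>xs. xs ! i"] i lu by simp
        hence "us ! i \<in> fc (map (subst \<sigma>) ts ! i)" using fc_eq_iff[OF uT tT] by simp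
        thus "map (eval A h) us ! i = map (eval A h) (map (subst \<sigma>) ts) ! i" using fc_sem[OF _ m h] i lu by simp
      qed (simp add: lu)
      moreover have "holds A h (Rel r us)" using validD[OF us(4) m h] .
      ultimately show "holds A h (Rel r (map (subst \<sigma>) ts))" by (simp only: holds.simps)
    qed
  next
    assume "valid (Rel r (map (subst \<sigma>) ts))"
    hence "set (map (subst \<sigma>) ts) \<subseteq> TT \<and> length (map (subst \<sigma>) ts) = ar r \<and> ([], Rel r (map (subst \<sigma>) ts)) \<in> Cn af ar Sig"
      using T l unfolding valid_def by simp
    hence "map fc (map (subst \<sigma>) ts) \<in> {map fc ts' | ts'. set ts' \<subseteq> TT \<and> length ts' = ar r \<and> ([], Rel r ts') \<in> Cn af ar Sig}"
      by blast
    thus "map fc (map (subst \<sigma>) ts) \<in> rel F r" by (simp add: Free_def)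
  qed
  thus ?thesis using Rel m by (simp only: holds.simps substA.simps)
qed

lemma F_model: "model af ar Sig F"
  unfolding model_def
proof (intro conjI ballI)
  show "is_struc af ar F" by (rule F_struc)
next
  fix q assume q: "q \<in> Sig"
  have wq: "\<forall>p\<in>set (fst q). wf_atom af ar p" "wf_atom af ar (snd q)" using wfSig q by (auto simp: wf_qid_def)
  show "sat_qid F q" unfolding sat_qid_def
  proof (intro allI impI)
    fix h assume h: "range h \<subseteq> carrier F" and p: "\<forall>p\<in>set (fst q). holds F h p"
    define \<sigma> where "\<sigma> v = (SOME u. u \<in> h v)" for v
    have hv: "h v \<in> carrier F" for v using h by auto
    have s: "\<forall>v. \<sigma> v \<in> TT" using rep_F(1)[OF hv] by (simp add: \<sigma>_def)
    have hs: "h = (\<lambda>v. fc (\<sigma> v))" using rep_F(2)[OF hv] by (auto simp: \<sigma>_def)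
    have vp: "valid (substA \<sigma> p)" if "p \<in> set (fst q)" for p
      using p that HF[OF s] wq(1) hs by auto
    have "valid (substA \<sigma> (snd q))" unfolding valid_iff
    proof (intro conjI allI impI)
      show "wf_atom af ar (substA \<sigma> (snd q))" using wf_substA[OF wq(2)] s by (auto simp: TT_iff)
    next
      fix A :: "(('f,nat) trm set,'f,'r) struc" and k :: "nat \<Rightarrow> _" assume m: "model af ar Sig A" and k: "range k \<subseteq> carrier A"
      have k': "\<forall>v. k v \<in> carrier A" using k by auto
      have "range (\<lambda>v. eval A k (\<sigma> v)) \<subseteq> carrier A"
        using eval_in[OF modelD(1)[OF m] _ k'] s by (auto simp: TT_iff)
      moreover have "\<forall>p\<in>set (fst q). holds A (\<lambda>v. eval A k (\<sigma> v)) p"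
        using vp validD[OF _ m k] holds_subst by blast
      ultimately have "holds A (\<lambda>v. eval A k (\<sigma> v)) (snd q)"
        using modelD(2)[OF m q] unfolding sat_qid_def by blast
      thus "holds A k (substA \<sigma> (snd q))" using holds_subst by blast
    qed
    thus "holds F h (snd q)" using HF[OF s wq(2)] hs by simp
  qed
qed

definition gh :: "(('f,nat) trm set,'f,'r) struc \<Rightarrow> (nat \<Rightarrow> ('f,nat) trm set) \<Rightarrow> ('f,nat) trm set \<Rightarrow> ('f,nat) trm set" where
  "gh A h X = eval A h (SOME u. u \<in> X)"

lemma gh_fc:
  assumes m: "model af ar Sig A" and h: "range h \<subseteq> carrier A" and t: "t \<in> TT"
  shows "gh A h (fc t) = eval A h t"
proof -
  have "t \<in> fc t" using fc_self[OF t] .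
  hence "(SOME u. u \<in> fc t) \<in> fc t" by (rule someI)
  thus ?thesis unfolding gh_def using fc_sem[OF _ m h] by blast
qed

lemma gh_hom:
  assumes m: "model af ar Sig A" and h: "range h \<subseteq> carrier A"
  shows "is_hom af F A (gh A h)"
proof -
  have A: "is_struc af ar A" using modelD(1)[OF m] .
  have h': "\<forall>v. h v \<in> carrier A" using h by auto
  have "\<forall>x\<in>carrier F. gh A h x \<in> carrier A"
  proof
    fix x assume "x \<in> carrier F"
    hence "(SOME u. u \<in> x) \<in> TT" by (rule rep_F(1))
    thus "gh A h x \<in> carrier A" unfolding gh_def using eval_in[OF A _ h'] by (simp add: TT_iff)
  qed
  moreover have "gh A h (fnc F f xs) = fnc A f (map (gh A h) xs)"
    if "set xs \<subseteq> carrier F" "length xs = af f" for f xs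
  proof -
    have "set (map (\<lambda>X. SOME u. u \<in> X) xs) \<subseteq> TT" using that(1) rep_F(1) by auto
    hence T: "Fn f (map (\<lambda>X. SOME u. u \<in> X) xs) \<in> TT" using that(2) Fn_TT by simp
    have "gh A h (fnc F f xs) = gh A h (fc (Fn f (map (\<lambda>X. SOME u. u \<in> X) xs)))" by (simp add: Free_def)
    also have "\<dots> = eval A h (Fn f (map (\<lambda>X. SOME u. u \<in> X) xs))" using gh_fc[OF m h T] .
    also have "\<dots> = fnc A f (map (gh A h) xs)" by (simp add: gh_def[abs_def] o_def)
    finally show ?thesis .
  qed
  moreover have "map (gh A h) xs \<in> rel A r" if xr: "xs \<in> rel F r" for r xs
  proof -
    obtain ts where ts: "xs = map fc ts" "set ts \<subseteq> TT" "valid (Rel r ts)" using xr by (auto simp: Free_def valid_def)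
    have "map (gh A h) xs = map (eval A h) ts"
      unfolding ts(1) map_map by (rule map_cong[OF refl]) (use ts(2) gh_fc[OF m h] in auto)
    moreover have "holds A h (Rel r ts)" using validD[OF ts(3) m h] .
    ultimately show ?thesis by simp
  qed
  ultimately show ?thesis unfolding is_hom_def by blast
qed

fun fa :: "('f,'r,nat) atom \<Rightarrow> (('f,nat) trm set,'r) fatom" where
  "fa (Eq s t) = FEq (fc s) (fc t)"
| "fa (Rel r ts) = FRel r (map fc ts)"

definition natom :: "('f,'r,nat) atom \<Rightarrow> bool" where
  "natom a \<longleftrightarrow> wf_atom af ar a \<and> avars a \<subseteq> {..<n}"

lemma natom_wf: "natom a \<Longrightarrow> wf_atom af ar a" by (simp add: natom_def)

lemma natom_Rel: "natom (Rel r ts) \<longleftrightarrow> length ts = ar r \<and> set ts \<subseteq> TT"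
  unfolding set_TT by (simp add: natom_def UN_subset_iff)

lemma natom_Eq: "natom (Eq s t) \<longleftrightarrow> s \<in> TT \<and> t \<in> TT"
  by (auto simp: natom_def TT_iff)

lemma fa_OV: "natom a \<Longrightarrow> fa a \<in> OV ar F"
  by (cases a) (auto simp: natom_Rel natom_Eq carrier_F)

lemma OV_fa:
  assumes "al \<in> OV ar F"
  shows "\<exists>a. natom a \<and> al = fa a"
proof (cases al)
  case (FEq X Y)
  hence "X \<in> carrier F" "Y \<in> carrier F" using assms by auto
  then obtain s t where "s \<in> TT" "t \<in> TT" "X = fc s" "Y = fc t" using carrier_F by auto
  thus ?thesis using FEq natom_Eq by (metis fa.simps(1))
next
  case (FRel r xs)
  hence xs: "set xs \<subseteq> carrier F" "length xs = ar r" using assms by auto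
  define ts where "ts = map (\<lambda>X. SOME u. u \<in> X) xs"
  have "set ts \<subseteq> TT" using xs rep_F(1) by (auto simp: ts_def)
  moreover have "map fc ts = xs" unfolding ts_def map_map
    by (rule map_idI) (use xs rep_F(2) in auto)
  moreover have "length ts = ar r" using xs by (simp add: ts_def)
  ultimately show ?thesis using FRel natom_Rel by (metis fa.simps(2))
qed

lemma fa_hom:
  assumes m: "model af ar Sig A" and h: "range h \<subseteq> carrier A" and a: "natom a"
  shows "fatom_map (gh A h) (fa a) = ev A h a"
proof (cases a)
  case (Eq s t) thus ?thesis using a gh_fc[OF m h] natom_Eq by simp
next
  case (Rel r ts)
  have "map (gh A h) (map fc ts) = map (eval A h) ts"
    unfolding map_map by (rule map_cong[OF refl]) (use a Rel natom_Rel gh_fc[OF m h] in auto)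
  thus ?thesis using Rel by simp
qed

definition c0 :: "nat \<Rightarrow> ('f,nat) trm set" where
  "c0 v = fc (Var (if v < n then v else 0))"

lemma c0_carrier: "range c0 \<subseteq> carrier F"
  using npos by (auto simp: c0_def carrier_F TT_iff)

lemma ev_c0:
  assumes a: "natom a"
  shows "ev F c0 a = fa a"
proof -
  define \<sigma> :: "nat \<Rightarrow> ('f,nat) trm" where "\<sigma> v = Var (if v < n then v else 0)" for v
  have s: "\<forall>v. \<sigma> v \<in> TT" using npos by (auto simp: \<sigma>_def TT_iff)
  have c: "c0 = (\<lambda>v. fc (\<sigma> v))" by (auto simp: c0_def \<sigma>_def)
  have id: "substA \<sigma> a = a" using a by (intro substA_id) (auto simp: natom_def \<sigma>_def)
  have w: "wf_atom af ar a" using a by (simp add: natom_def)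
  show ?thesis
  proof (cases a)
    case (Eq s' t') thus ?thesis using F_eval[OF s] c w id by simp
  next
    case (Rel r ts)
    have "map (eval F (\<lambda>v. fc (\<sigma> v))) ts = map fc (map (subst \<sigma>) ts)"
      unfolding map_map by (rule map_cong[OF refl]) (use w Rel F_eval[OF s] in auto)
    moreover have e: "map (subst \<sigma>) ts = ts" using id Rel by simp
    ultimately show ?thesis unfolding Rel ev.simps fa.simps c by (simp only:)
  qed
qed

end



context FS
begin

abbreviation "OVF \<equiv> OV ar F"
abbreviation "LL \<equiv> ConK af ar Sig F"
abbreviation "TC \<equiv> TnK af ar Sig n"

definition CSx :: "('f,'r) qid set \<Rightarrow> (('f,nat) trm set,'r) fatom set \<Rightarrow> bool" where
  "CSx X D \<longleftrightarrow> structS af ar F D \<and> closedS X F D"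

definition genA :: "('f,'r) qid set \<Rightarrow> (('f,nat) trm set,'r) fatom set \<Rightarrow> (('f,nat) trm set,'r) fatom set" where
  "genA X G = \<Inter>{D. CSx X D \<and> G \<subseteq> D}"

lemma CSx_OV: "CSx X D \<Longrightarrow> D \<subseteq> OVF"
  unfolding CSx_def using structS_D(1) by blast

lemma CSx_top: "\<forall>q\<in>X. wf_qid af ar q \<Longrightarrow> CSx X OVF"
  unfolding CSx_def using top_cong[OF F_struc] by blast

lemma gen_CS:
  assumes X: "\<forall>q\<in>X. wf_qid af ar q" and G: "G \<subseteq> OVF"
  shows "CSx X (genA X G)"
proof -
  have "{D. CSx X D \<and> G \<subseteq> D} \<noteq> {}" using CSx_top[OF X] G by blast
  thus ?thesis unfolding genA_def CSx_def by (rule inter_cong) blast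
qed

lemma gen_ext: "\<forall>q\<in>X. wf_qid af ar q \<Longrightarrow> G \<subseteq> OVF \<Longrightarrow> G \<subseteq> genA X G"
  unfolding genA_def by blast

lemma gen_least: "CSx X D \<Longrightarrow> G \<subseteq> D \<Longrightarrow> genA X G \<subseteq> D"
  unfolding genA_def by blast

lemma gen_OV: "\<forall>q\<in>X. wf_qid af ar q \<Longrightarrow> G \<subseteq> OVF \<Longrightarrow> genA X G \<subseteq> OVF"
  using CSx_OV gen_CS by blast

lemma gen_mono: "\<forall>q\<in>X. wf_qid af ar q \<Longrightarrow> G \<subseteq> H \<Longrightarrow> H \<subseteq> OVF \<Longrightarrow> genA X G \<subseteq> genA X H"
  using gen_least[OF gen_CS] gen_ext by (meson subset_trans)

lemma gen_closed: "CSx X D \<Longrightarrow> genA X D = D"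
  unfolding genA_def by blast

lemma gen_idem: "\<forall>q\<in>X. wf_qid af ar q \<Longrightarrow> G \<subseteq> OVF \<Longrightarrow> genA X (genA X G) = genA X G"
  using gen_closed gen_CS by blast

lemma gen_sandwich:
  assumes X: "\<forall>q\<in>X. wf_qid af ar q" and "G \<subseteq> H" "H \<subseteq> genA X G" "G \<subseteq> OVF"
  shows "genA X H = genA X G"
proof
  show "genA X H \<subseteq> genA X G" using gen_least[OF gen_CS[OF X assms(4)] assms(3)] .
  show "genA X G \<subseteq> genA X H" using gen_mono[OF X assms(2)] assms(3) gen_OV[OF X assms(4)] by blast
qed

lemma gen_Un: "\<forall>q\<in>X. wf_qid af ar q \<Longrightarrow> G \<subseteq> OVF \<Longrightarrow> H \<subseteq> OVF \<Longrightarrow>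
    genA X (genA X G \<union> genA X H) = genA X (G \<union> H)"
proof -
  assume X: "\<forall>q\<in>X. wf_qid af ar q" and G: "G \<subseteq> OVF" and H: "H \<subseteq> OVF"
  have GH: "G \<union> H \<subseteq> OVF" using G H by blast
  have "genA X G \<subseteq> genA X (G \<union> H)" "genA X H \<subseteq> genA X (G \<union> H)"
    using gen_mono[OF X _ GH] by auto
  moreover have "G \<union> H \<subseteq> genA X G \<union> genA X H" using gen_ext[OF X G] gen_ext[OF X H] by blast
  ultimately show ?thesis using gen_sandwich[OF X, of "G \<union> H" "genA X G \<union> genA X H"] GH by blast
qed

lemma ConK_CS: "\<forall>q\<in>X. wf_qid af ar q \<Longrightarrow> th \<in> ConK af ar X F \<longleftrightarrow> CSx X (At th)"
  unfolding CSx_def using ConK_iff[OF F_struc] by blast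

lemma CSx_mono: "X \<subseteq> Y \<Longrightarrow> CSx Y D \<Longrightarrow> CSx X D"
  unfolding CSx_def using closedS_mono by blast

lemma gen_comp:
  assumes X: "\<forall>q\<in>X. wf_qid af ar q" and Y: "\<forall>q\<in>Y. wf_qid af ar q" and XY: "X \<subseteq> Y" and G: "G \<subseteq> OVF"
  shows "genA Y (genA X G) = genA Y G"
proof (rule gen_sandwich[OF Y])
  show "G \<subseteq> genA X G" using gen_ext[OF X G] .
  show "genA X G \<subseteq> genA Y G" using gen_least[OF CSx_mono[OF XY gen_CS[OF Y G]] gen_ext[OF Y G]] .
qed (rule G)

lemma gen_comp2:
  assumes X: "\<forall>q\<in>X. wf_qid af ar q" and Y: "\<forall>q\<in>Y. wf_qid af ar q" and XY: "X \<subseteq> Y" and G: "G \<subseteq> OVF"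
  shows "genA X G \<subseteq> genA Y G"
  using gen_least[OF CSx_mono[OF XY gen_CS[OF Y G]] gen_ext[OF Y G]] .

lemma LL_iff: "th \<in> LL \<longleftrightarrow> CSx Sig (At th)"
  using ConK_CS[OF wfSig] .

lemma mk_gen_LL: "G \<subseteq> OVF \<Longrightarrow> mk (genA Sig G) \<in> LL"
  using LL_iff gen_CS[OF wfSig] by simp

lemma is_lub_unique: "is_lub L S u \<Longrightarrow> is_lub L S v \<Longrightarrow> u = v"
  unfolding is_lub_def cle_At by (metis At_eq_iff subset_antisym)

lemma lub_eq:
  assumes S: "S \<subseteq> LL"
  shows "lub LL S = mk (genA Sig (\<Union>(At ` S)))"
proof -
  have U: "\<Union>(At ` S) \<subseteq> OVF" using S LL_iff CSx_OV by blast
  have "is_lub LL S (mk (genA Sig (\<Union>(At ` S))))"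
    unfolding is_lub_def cle_At
  proof (intro conjI ballI impI)
    show "mk (genA Sig (\<Union>(At ` S))) \<in> LL" using mk_gen_LL[OF U] .
  next
    fix x assume "x \<in> S" thus "At x \<subseteq> At (mk (genA Sig (\<Union>(At ` S))))" using gen_ext[OF wfSig U] by auto
  next
    fix v assume v: "v \<in> LL" "\<forall>x\<in>S. At x \<subseteq> At v"
    show "At (mk (genA Sig (\<Union>(At ` S)))) \<subseteq> At v"
      using gen_least[of Sig "At v" "\<Union>(At ` S)"] v LL_iff by auto
  qed
  thus ?thesis unfolding lub_def using is_lub_unique by blast
qed

lemma At_lub: "S \<subseteq> LL \<Longrightarrow> At (lub LL S) = genA Sig (\<Union>(At ` S))"
  using lub_eq by simp

lemma pcon_eq:
  assumes al: "al \<in> OVF"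
  shows "pcon LL al = mk (genA Sig {al})"
proof -
  have al': "{al} \<subseteq> OVF" using al by blast
  have P: "mk (genA Sig {al}) \<in> LL \<and> fatom_in (mk (genA Sig {al})) al \<and>
      (\<forall>ps\<in>LL. fatom_in ps al \<longrightarrow> cle (mk (genA Sig {al})) ps)"
  proof (intro conjI ballI impI)
    show "mk (genA Sig {al}) \<in> LL" using mk_gen_LL[OF al'] .
    have "al \<in> At (mk (genA Sig {al}))" using gen_ext[OF wfSig al'] by simp
    thus "fatom_in (mk (genA Sig {al})) al" by (simp add: At_def)
  next
    fix ps assume "ps \<in> LL" "fatom_in ps al"
    hence "CSx Sig (At ps)" "{al} \<subseteq> At ps" using LL_iff by (auto simp: At_def)
    thus "cle (mk (genA Sig {al})) ps" unfolding cle_At using gen_least by simp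
  qed
  show ?thesis unfolding pcon_def
  proof (rule the_equality)
    show "mk (genA Sig {al}) \<in> LL \<and> fatom_in (mk (genA Sig {al})) al \<and>
      (\<forall>ps\<in>LL. fatom_in ps al \<longrightarrow> cle (mk (genA Sig {al})) ps)" by (rule P)
  next
    fix th assume th: "th \<in> LL \<and> fatom_in th al \<and> (\<forall>ps\<in>LL. fatom_in ps al \<longrightarrow> cle th ps)"
    have "cle th (mk (genA Sig {al}))" using th P by blast
    moreover have "cle (mk (genA Sig {al})) th" using th P by blast
    ultimately show "th = mk (genA Sig {al})" unfolding cle_At by (metis At_eq_iff subset_antisym)
  qed
qed

lemma sing_sub: "A \<subseteq> OVF \<Longrightarrow> A \<subseteq> (\<Union>al\<in>A. genA Sig {al})"
proof
  fix al assume A: "A \<subseteq> OVF" and al: "al \<in> A"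
  have "{al} \<subseteq> OVF" using A al by blast
  hence "al \<in> genA Sig {al}" using gen_ext[OF wfSig] by blast
  thus "al \<in> (\<Union>al\<in>A. genA Sig {al})" using al by (rule UN_I[rotated])
qed

lemma sing_sub2: "A \<subseteq> OVF \<Longrightarrow> (\<Union>al\<in>A. genA Sig {al}) \<subseteq> genA Sig A"
proof (rule UN_least)
  fix al assume A: "A \<subseteq> OVF" and al: "al \<in> A"
  have "{al} \<subseteq> A" using al by blast
  thus "genA Sig {al} \<subseteq> genA Sig A" using gen_mono[OF wfSig _ A] by blast
qed

lemma lub_pcon:
  assumes A: "A \<subseteq> OVF"
  shows "lub LL (pcon LL ` A) = mk (genA Sig A)"
proof -
  have pc: "pcon LL ` A = (\<lambda>al. mk (genA Sig {al})) ` A"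
    by (rule image_cong[OF refl]) (use pcon_eq A in blast)
  have S: "pcon LL ` A \<subseteq> LL" unfolding pc using A mk_gen_LL by blast
  have U: "\<Union>(At ` pcon LL ` A) = (\<Union>al\<in>A. genA Sig {al})" unfolding pc by auto
  have "genA Sig (\<Union>al\<in>A. genA Sig {al}) = genA Sig A"
  proof (rule gen_sandwich[OF wfSig])
    show "A \<subseteq> (\<Union>al\<in>A. genA Sig {al})" using sing_sub[OF A] .
    show "(\<Union>al\<in>A. genA Sig {al}) \<subseteq> genA Sig A" using sing_sub2[OF A] .
  qed (rule A)
  thus ?thesis using lub_eq[OF S] U by simp
qed

lemma alg:
  assumes U: "U \<subseteq> OVF" and g: "g \<in> genA Sig U"
  shows "\<exists>U'. U' \<subseteq> U \<and> finite U' \<and> g \<in> genA Sig U'"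
proof -
  define \<D> where "\<D> = (genA Sig) ` {U'. U' \<subseteq> U \<and> finite U'}"
  have ne: "\<D> \<noteq> {}" unfolding \<D>_def by blast
  have dir: "\<exists>D3\<in>\<D>. D1 \<union> D2 \<subseteq> D3" if d: "D1 \<in> \<D>" "D2 \<in> \<D>" for D1 D2
  proof -
    obtain U1 where u1: "D1 = genA Sig U1" "U1 \<subseteq> U" "finite U1" using d(1) unfolding \<D>_def by blast
    obtain U2 where u2: "D2 = genA Sig U2" "U2 \<subseteq> U" "finite U2" using d(2) unfolding \<D>_def by blast
    have o: "U1 \<union> U2 \<subseteq> OVF" using u1(2) u2(2) U by blast
    have "genA Sig U1 \<subseteq> genA Sig (U1 \<union> U2)" by (rule gen_mono[OF wfSig _ o]) blast
    moreover have "genA Sig U2 \<subseteq> genA Sig (U1 \<union> U2)" by (rule gen_mono[OF wfSig _ o]) blast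
    moreover have "U1 \<union> U2 \<in> {U'. U' \<subseteq> U \<and> finite U'}" using u1 u2 by blast
    hence "genA Sig (U1 \<union> U2) \<in> \<D>" unfolding \<D>_def by (rule imageI)
    ultimately show ?thesis using u1(1) u2(1) by blast
  qed
  have all: "structS af ar F D \<and> closedS Sig F D" if d: "D \<in> \<D>" for D
  proof -
    obtain U' where u: "D = genA Sig U'" "U' \<subseteq> U" using d unfolding \<D>_def by blast
    have "U' \<subseteq> OVF" using u(2) U by (rule subset_trans)
    thus ?thesis using gen_CS[OF wfSig] u(1) unfolding CSx_def by blast
  qed
  have "CSx Sig (\<Union>\<D>)" unfolding CSx_def using union_cong[OF ne dir all] by blast
  moreover have "U \<subseteq> \<Union>\<D>"
  proof
    fix u assume u: "u \<in> U"
    have o: "{u} \<subseteq> OVF" using u U by blast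
    have "u \<in> genA Sig {u}" using gen_ext[OF wfSig o] by blast
    moreover have "{u} \<in> {U'. U' \<subseteq> U \<and> finite U'}" using u by blast
    hence "genA Sig {u} \<in> \<D>" unfolding \<D>_def by (rule imageI)
    ultimately show "u \<in> \<Union>\<D>" by blast
  qed
  ultimately have "genA Sig U \<subseteq> \<Union>\<D>" by (rule gen_least)
  hence "g \<in> \<Union>\<D>" using g by blast
  then obtain U' where "U' \<in> {U'. U' \<subseteq> U \<and> finite U'}" "g \<in> genA Sig U'" unfolding \<D>_def by blast
  thus ?thesis by blast
qed

lemma alg_fin:
  assumes fin: "finite G" and U: "U \<subseteq> OVF" and G: "G \<subseteq> genA Sig U"
  shows "\<exists>U'. U' \<subseteq> U \<and> finite U' \<and> G \<subseteq> genA Sig U'"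
  using fin G
proof (induction G rule: finite_induct)
  case empty thus ?case by blast
next
  case (insert g G)
  then obtain U1 where U1: "U1 \<subseteq> U" "finite U1" "G \<subseteq> genA Sig U1" by blast
  obtain U2 where U2: "U2 \<subseteq> U" "finite U2" "g \<in> genA Sig U2" using alg[OF U] insert.prems by blast
  have o: "U1 \<union> U2 \<subseteq> OVF" using U1(1) U2(1) U by blast
  have 1: "genA Sig U1 \<subseteq> genA Sig (U1 \<union> U2)" by (rule gen_mono[OF wfSig _ o]) blast
  have 2: "genA Sig U2 \<subseteq> genA Sig (U1 \<union> U2)" by (rule gen_mono[OF wfSig _ o]) blast
  have "insert g G \<subseteq> genA Sig (U1 \<union> U2)" using 1 2 U1(3) U2(3) by blast
  moreover have "U1 \<union> U2 \<subseteq> U" "finite (U1 \<union> U2)" using U1 U2 by auto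
  ultimately show ?case by blast
qed

lemma compact_iff: "compact LL x \<longleftrightarrow> (\<exists>G. finite G \<and> G \<subseteq> OVF \<and> x = mk (genA Sig G))"
proof
  assume c: "compact LL x"
  hence xL: "x \<in> LL" and cx: "\<And>S. S \<subseteq> LL \<Longrightarrow> cle x (lub LL S) \<Longrightarrow> \<exists>S'. S' \<subseteq> S \<and> finite S' \<and> cle x (lub LL S')"
    unfolding compact_def by blast+
  have csx: "CSx Sig (At x)" using xL LL_iff by blast
  have ox: "At x \<subseteq> OVF" using CSx_OV[OF csx] .
  define S where "S = (\<lambda>al. mk (genA Sig {al})) ` At x"
  have S: "S \<subseteq> LL" unfolding S_def using mk_gen_LL ox by blast
  have US: "\<Union>(At ` S) = (\<Union>al\<in>At x. genA Sig {al})" unfolding S_def by auto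
  have sand: "genA Sig (\<Union>al\<in>G. genA Sig {al}) = genA Sig G" if "G \<subseteq> OVF" for G
  proof (rule gen_sandwich[OF wfSig])
    show "G \<subseteq> (\<Union>al\<in>G. genA Sig {al})" using sing_sub[OF that] .
    show "(\<Union>al\<in>G. genA Sig {al}) \<subseteq> genA Sig G" using sing_sub2[OF that] .
  qed (rule that)
  have "At (lub LL S) = At x" using At_lub[OF S] US sand[OF ox] gen_closed[OF csx] by simp
  hence "cle x (lub LL S)" unfolding cle_At by simp
  then obtain S' where S': "S' \<subseteq> S" "finite S'" "cle x (lub LL S')" using cx[OF S] by blast
  have "S' \<subseteq> (\<lambda>al. mk (genA Sig {al})) ` At x" using S'(1) unfolding S_def .
  hence "\<exists>C\<subseteq>At x. finite C \<and> S' = (\<lambda>al. mk (genA Sig {al})) ` C" by (rule finite_subset_image[OF S'(2)])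
  then obtain G where G: "G \<subseteq> At x" "finite G" "S' = (\<lambda>al. mk (genA Sig {al})) ` G" by blast
  have G': "G \<subseteq> OVF" using G ox by blast
  have "At (lub LL S') = genA Sig G"
    using At_lub[of S'] S' S sand[OF G'] G by (auto simp: image_image)
  hence "At x \<subseteq> genA Sig G" using S'(3) cle_At by blast
  moreover have "genA Sig G \<subseteq> At x" using gen_least[OF csx G(1)] .
  ultimately have "x = mk (genA Sig G)" by (metis mk_At subset_antisym)
  thus "\<exists>G. finite G \<and> G \<subseteq> OVF \<and> x = mk (genA Sig G)" using G G' by blast
next
  assume "\<exists>G. finite G \<and> G \<subseteq> OVF \<and> x = mk (genA Sig G)"
  then obtain G where G: "finite G" "G \<subseteq> OVF" "x = mk (genA Sig G)" by blast
  show "compact LL x" unfolding compact_def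
  proof (intro conjI allI impI)
    show "x \<in> LL" using G mk_gen_LL by simp
  next
    fix S assume S: "S \<subseteq> LL" and cl: "cle x (lub LL S)"
    have U: "\<Union>(At ` S) \<subseteq> OVF" using S LL_iff CSx_OV by blast
    have "At x \<subseteq> At (lub LL S)" using cl cle_At by blast
    hence "genA Sig G \<subseteq> genA Sig (\<Union>(At ` S))" using G(3) At_lub[OF S] by simp
    hence "G \<subseteq> genA Sig (\<Union>(At ` S))" using gen_ext[OF wfSig G(2)] by blast
    then obtain U' where U': "U' \<subseteq> \<Union>(At ` S)" "finite U'" "G \<subseteq> genA Sig U'" using alg_fin[OF G(1) U] by blast
    obtain FF where FF: "finite FF" "FF \<subseteq> At ` S" "U' \<subseteq> \<Union>FF" using finite_subset_Union[OF U'(2) U'(1)] by blast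
    have "\<exists>C\<subseteq>S. finite C \<and> FF = At ` C" by (rule finite_subset_image[OF FF(1) FF(2)])
    then obtain S' where S': "S' \<subseteq> S" "finite S'" "FF = At ` S'" by blast
    have S'L: "S' \<subseteq> LL" using S' S by blast
    have U2: "\<Union>(At ` S') \<subseteq> OVF" using S'L LL_iff CSx_OV by blast
    have "genA Sig U' \<subseteq> genA Sig (\<Union>(At ` S'))" using gen_mono[OF wfSig _ U2] FF(3) S'(3) by blast
    hence "G \<subseteq> At (lub LL S')" using U'(3) At_lub[OF S'L] by blast
    hence "genA Sig G \<subseteq> At (lub LL S')" using gen_least[of Sig "At (lub LL S')" G] At_lub[OF S'L] gen_CS[OF wfSig U2] by simp
    hence "cle x (lub LL S')" unfolding G(3) cle_At At_mk .
    thus "\<exists>S'. S' \<subseteq> S \<and> finite S' \<and> cle x (lub LL S')" using S' by blast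
  qed
qed

lemma TC_iff: "x \<in> TC \<longleftrightarrow> (\<exists>G. finite G \<and> G \<subseteq> OVF \<and> x = mk (genA Sig G))"
  unfolding TnK_def using compact_iff by simp

lemma TC_LL: "x \<in> TC \<Longrightarrow> x \<in> LL"
  using TC_iff mk_gen_LL by auto

lemma TC_CS: "x \<in> TC \<Longrightarrow> CSx Sig (At x)"
  using TC_LL LL_iff by blast

lemma TC_OV: "x \<in> TC \<Longrightarrow> At x \<subseteq> OVF"
  using TC_CS CSx_OV by blast

lemma TC_gen: "finite G \<Longrightarrow> G \<subseteq> OVF \<Longrightarrow> mk (genA Sig G) \<in> TC"
  using TC_iff by blast

lemma join_eq:
  assumes "a \<in> LL" "b \<in> LL"
  shows "lub LL {a,b} = mk (genA Sig (At a \<union> At b))"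
  using lub_eq[of "{a,b}"] assms by simp

lemma join_TC:
  assumes a: "a \<in> TC" and b: "b \<in> TC"
  shows "lub LL {a,b} \<in> TC"
proof -
  obtain G where G: "finite G" "G \<subseteq> OVF" "a = mk (genA Sig G)" using a TC_iff by blast
  obtain H where H: "finite H" "H \<subseteq> OVF" "b = mk (genA Sig H)" using b TC_iff by blast
  have "lub LL {a,b} = mk (genA Sig (G \<union> H))"
    using join_eq[OF TC_LL[OF a] TC_LL[OF b]] G H gen_Un[OF wfSig G(2) H(2)] by simp
  thus ?thesis using TC_gen G H by simp
qed

lemma PB:
  assumes X: "\<forall>q\<in>X. wf_qid af ar q" and e: "is_hom af F F e" and G: "G \<subseteq> OVF" and H: "H \<subseteq> OVF"
    and GH: "G \<subseteq> genA X H"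
  shows "fatom_map e ` G \<subseteq> genA X (fatom_map e ` H)"
proof -
  have eH: "fatom_map e ` H \<subseteq> OVF" using H fatom_map_OV[OF e] by blast
  define D where "D = genA X (fatom_map e ` H)"
  have D: "structS af ar F D \<and> closedS X F D" using gen_CS[OF X eH] unfolding D_def CSx_def .
  have P: "CSx X {al \<in> OVF. fatom_map e al \<in> D}"
    unfolding CSx_def by (rule pullback_cong[OF F_struc F_struc e X D])
  have "H \<subseteq> {al \<in> OVF. fatom_map e al \<in> D}" using H gen_ext[OF X eH] unfolding D_def by blast
  hence "genA X H \<subseteq> {al \<in> OVF. fatom_map e al \<in> D}" using gen_least[OF P] by blast
  thus ?thesis using GH unfolding D_def by blast
qed

lemma PB_eq:
  assumes X: "\<forall>q\<in>X. wf_qid af ar q" and e: "is_hom af F F e" and G: "G \<subseteq> OVF" and H: "H \<subseteq> OVF"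
    and GH: "genA X G = genA X H"
  shows "genA X (fatom_map e ` G) = genA X (fatom_map e ` H)"
proof -
  have eG: "fatom_map e ` G \<subseteq> OVF" using G fatom_map_OV[OF e] by blast
  have eH: "fatom_map e ` H \<subseteq> OVF" using H fatom_map_OV[OF e] by blast
  have "fatom_map e ` G \<subseteq> genA X (fatom_map e ` H)"
    using PB[OF X e G H] GH gen_ext[OF X G] by blast
  hence 1: "genA X (fatom_map e ` G) \<subseteq> genA X (fatom_map e ` H)" using gen_least[OF gen_CS[OF X eH]] by blast
  have "fatom_map e ` H \<subseteq> genA X (fatom_map e ` G)"
    using PB[OF X e H G] GH gen_ext[OF X H] by blast
  hence 2: "genA X (fatom_map e ` H) \<subseteq> genA X (fatom_map e ` G)" using gen_least[OF gen_CS[OF X eG]] by blast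
  show ?thesis using 1 2 by blast
qed

lemma hat_eq:
  assumes e: "is_hom af F F e" and G: "set als \<subseteq> OVF"
  shows "hat ar F LL e (mk (genA Sig (set als))) = mk (genA Sig (fatom_map e ` set als))"
proof -
  have eG: "fatom_map e ` set als \<subseteq> OVF" using G fatom_map_OV[OF e] by blast
  show ?thesis unfolding hat_def
  proof (rule the_equality)
    show "\<exists>als'. (\<forall>al\<in>set als'. fatom_over ar F al) \<and> mk (genA Sig (set als)) = lub LL (pcon LL ` set als') \<and>
        mk (genA Sig (fatom_map e ` set als)) = lub LL (pcon LL ` fatom_map e ` set als')"
      using G lub_pcon[OF G] lub_pcon[OF eG] by (intro exI[of _ als]) (auto simp: OV_def)
  next
    fix ps assume "\<exists>als'. (\<forall>al\<in>set als'. fatom_over ar F al) \<and> mk (genA Sig (set als)) = lub LL (pcon LL ` set als') \<and>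
        ps = lub LL (pcon LL ` fatom_map e ` set als')"
    then obtain als' where a: "set als' \<subseteq> OVF" "mk (genA Sig (set als)) = lub LL (pcon LL ` set als')"
        "ps = lub LL (pcon LL ` fatom_map e ` set als')" by (auto simp: OV_def)
    have eG': "fatom_map e ` set als' \<subseteq> OVF" using a(1) fatom_map_OV[OF e] by blast
    have "genA Sig (set als) = genA Sig (set als')" using a(2) lub_pcon[OF a(1)] At_eq_iff by (metis At_mk)
    hence "genA Sig (fatom_map e ` set als) = genA Sig (fatom_map e ` set als')"
      using PB_eq[OF wfSig e G a(1)] by blast
    thus "ps = mk (genA Sig (fatom_map e ` set als))" using a(3) lub_pcon[OF eG'] by simp
  qed
qed

end



lemma Cn_wf: "q \<in> Cn af ar X \<Longrightarrow> wf_qid af ar q"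
  by (simp add: Cn_def)

lemma Cn_sub: "\<forall>q\<in>X. wf_qid af ar q \<Longrightarrow> X \<subseteq> Cn af ar X"
  by (auto simp: Cn_def model_def)

lemma Cn_mono: "X \<subseteq> Y \<Longrightarrow> Cn af ar X \<subseteq> Cn af ar Y"
  by (auto simp: Cn_def model_def)

lemma model_Cn: "model af ar X (A :: (('f,nat) trm set,'f,'r) struc) \<Longrightarrow> model af ar (Cn af ar X) A"
  by (auto simp: Cn_def model_def)

lemma Cn_idem:
  fixes af :: "'f \<Rightarrow> nat" and ar :: "'r \<Rightarrow> nat" and X :: "('f,'r) qid set"
  shows "\<forall>q\<in>X. wf_qid af ar q \<Longrightarrow> Cn af ar (Cn af ar X) = Cn af ar X"
proof
  assume X: "\<forall>q\<in>X. wf_qid af ar q"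
  show "Cn af ar (Cn af ar X) \<subseteq> Cn af ar X"
  proof
    fix q assume q: "q \<in> Cn af ar (Cn af ar X)"
    show "q \<in> Cn af ar X" unfolding Cn_def
    proof (intro CollectI conjI allI impI)
      show "wf_qid af ar q" using q by (simp add: Cn_def)
      fix A :: "(('f,nat) trm set,'f,'r) struc" assume "model af ar X A"
      hence "model af ar (Cn af ar X) A" by (rule model_Cn)
      thus "sat_qid A q" using q by (simp add: Cn_def)
    qed
  qed
  show "Cn af ar X \<subseteq> Cn af ar (Cn af ar X)" by (rule Cn_sub) (auto simp: Cn_def)
qed

lemma holds_cong: "(\<forall>v\<in>avars a. h v = k v) \<Longrightarrow> holds A h a \<longleftrightarrow> holds A k a"
proof (cases a)
  case (Rel r ts)
  moreover assume "\<forall>v\<in>avars a. h v = k v"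
  ultimately have "map (eval A h) ts = map (eval A k) ts" by (intro map_cong refl eval_cong) auto
  thus ?thesis using Rel by (simp only: holds.simps)
next
  case (Eq s t)
  moreover assume a: "\<forall>v\<in>avars a. h v = k v"
  ultimately have "eval A h s = eval A k s" "eval A h t = eval A k t" by (auto intro!: eval_cong)
  thus ?thesis using Eq by simp
qed

context FS
begin

definition qthy :: "('f,'r) qid set \<Rightarrow> bool" where
  "qthy T \<longleftrightarrow> qe_theory af ar T \<and> Cn af ar Sig \<subseteq> T"

lemma qthy_wf: "qthy T \<Longrightarrow> \<forall>q\<in>T. wf_qid af ar q"
  unfolding qthy_def qe_theory_def using Cn_wf by metis

lemma qthy_Sig: "qthy T \<Longrightarrow> Sig \<subseteq> T"
  unfolding qthy_def using Cn_sub[OF wfSig] by blast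

lemma qthy_Cn: "qthy T \<Longrightarrow> Cn af ar T = T"
  unfolding qthy_def qe_theory_def by blast

lemma QT_qthy: "T \<in> QTheories af ar Sig n \<Longrightarrow> qthy T"
  unfolding QTheories_def qthy_def by blast

lemma Union_inj:
  assumes c: "is_cong af ar F th"
  shows "inj_on Union (carrier (quot F th))"
proof (rule inj_onI)
  have eq: "equiv (carrier F) (fst th)" using is_cong_D(1)[OF c] .
  fix C1 C2 assume C1: "C1 \<in> carrier (quot F th)" and C2: "C2 \<in> carrier (quot F th)" and U: "\<Union>C1 = \<Union>C2"
  have q1: "C1 \<in> carrier F // fst th" and q2: "C2 \<in> carrier F // fst th" using C1 C2 by (auto simp: quot_def)
  obtain x where x: "x \<in> C1" using in_quotient_imp_non_empty[OF eq q1] by blast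
  have xc: "x \<in> carrier F" using x q1 eq by (meson in_quotient_imp_subset subsetD)
  then obtain t where t: "t \<in> TT" "x = fc t" using carrier_F by auto
  have "t \<in> x" using t fc_self by simp
  hence "t \<in> \<Union>C2" using x U by blast
  then obtain y where y: "y \<in> C2" "t \<in> y" by blast
  have yc: "y \<in> carrier F" using y q2 eq by (meson in_quotient_imp_subset subsetD)
  then obtain t' where t': "t' \<in> TT" "y = fc t'" using carrier_F by auto
  have "fc t = fc t'" using fc_eq[OF _ t'(1)] y(2) t'(2) by simp
  hence "x = y" using t t' by simp
  hence "C1 \<inter> C2 \<noteq> {}" using x y by blast
  thus "C1 = C2" using quotient_disj[OF eq q1 q2] by blast
qed

lemma quot_model_Cn:
  assumes c: "is_cong af ar F th" and X: "\<forall>q\<in>X. wf_qid af ar q" and m: "model af ar X (quot F th)"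
  shows "model af ar (Cn af ar X) (quot F th)"
proof -
  have Q: "is_struc af ar (quot F th)" using quot_struc[OF F_struc c] .
  note inj = Union_inj[OF c]
  have "model af ar X (imgS Union (quot F th))" using img_model[OF Q inj X] m by blast
  hence "model af ar (Cn af ar X) (imgS Union (quot F th))" by (rule model_Cn)
  moreover have "\<forall>q\<in>Cn af ar X. wf_qid af ar q" using Cn_wf by blast
  ultimately show ?thesis using img_model[OF Q inj] by blast
qed

lemma M:
  assumes T: "qthy T" and ps: "\<forall>p\<in>set ps. natom p" and b: "natom b"
  shows "(ps, b) \<in> T \<longleftrightarrow> fa b \<in> genA T (fa ` set ps)"
proof -
  have wT: "\<forall>q\<in>T. wf_qid af ar q" using qthy_wf[OF T] .
  have G: "fa ` set ps \<subseteq> OVF" using ps fa_OV by blast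
  show ?thesis
  proof
    assume q: "(ps, b) \<in> T"
    have C: "CSx T (genA T (fa ` set ps))" using gen_CS[OF wT G] .
    have "\<And>p. p \<in> set (fst (ps,b)) \<Longrightarrow> ev F c0 p \<in> genA T (fa ` set ps)"
      using ev_c0 ps gen_ext[OF wT G] by auto
    hence "ev F c0 (snd (ps,b)) \<in> genA T (fa ` set ps)"
      using closedS_D[OF _ q c0_carrier] C unfolding CSx_def by blast
    thus "fa b \<in> genA T (fa ` set ps)" using ev_c0[OF b] by simp
  next
    assume fb: "fa b \<in> genA T (fa ` set ps)"
    have "(ps, b) \<in> Cn af ar T" unfolding Cn_def
    proof (intro CollectI conjI allI impI)
      show "wf_qid af ar (ps, b)" using ps b by (simp add: wf_qid_def natom_def)
    next
      fix A :: "(('f,nat) trm set,'f,'r) struc" assume mT: "model af ar T A"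
      have A: "is_struc af ar A" using modelD(1)[OF mT] .
      have mS: "model af ar Sig A" using mT qthy_Sig[OF T] by (auto simp: model_def)
      show "sat_qid A (ps, b)" unfolding sat_qid_def
      proof (intro allI impI)
        fix h :: "nat \<Rightarrow> _" assume h: "range h \<subseteq> carrier A" and p: "\<forall>p\<in>set (fst (ps, b)). holds A h p"
        have h': "\<forall>v. h v \<in> carrier A" using h by auto
        note g = gh_hom[OF mS h]
        have TrA: "structS af ar A (Tr A) \<and> closedS T A (Tr A)"
          using Tr_cong[OF A wT] mT by (auto simp: model_def)
        define K where "K = {al \<in> OVF. fatom_map (gh A h) al \<in> Tr A}"
        have K: "CSx T K" unfolding CSx_def K_def by (rule pullback_cong[OF F_struc A g wT TrA])
        have "fa ` set ps \<subseteq> K"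
        proof
          fix x assume "x \<in> fa ` set ps"
          then obtain p where pp: "p \<in> set ps" "x = fa p" by blast
          have "holds A h p" using p pp by simp
          hence "ev A h p \<in> Tr A" using holds_Tr[OF A natom_wf h'] ps pp by blast
          thus "x \<in> K" unfolding K_def using pp fa_hom[OF mS h] ps fa_OV by auto
        qed
        hence "fa b \<in> K" using gen_least[OF K] fb by blast
        hence "ev A h b \<in> Tr A" unfolding K_def using fa_hom[OF mS h b] by simp
        thus "holds A h (snd (ps, b))" using holds_Tr[OF A natom_wf[OF b] h'] by simp
      qed
    qed
    thus "(ps, b) \<in> T" using qthy_Cn[OF T] by simp
  qed
qed

definition Phi :: "('f,'r) qid set \<Rightarrow> ((('f,nat) trm set,'r) cong \<times> (('f,nat) trm set,'r) cong) set" where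
  "Phi T = {(a,b). a \<in> TC \<and> b \<in> TC \<and> genA T (At a) = genA T (At b)}"

lemma TC_fin: "a \<in> TC \<Longrightarrow> \<exists>als. set als \<subseteq> OVF \<and> a = mk (genA Sig (set als))"
  using TC_iff finite_list by metis

lemma Phi_ConSn:
  assumes T: "qthy T"
  shows "Phi T \<in> ConSn af ar Sig n"
proof -
  have wT: "\<forall>q\<in>T. wf_qid af ar q" using qthy_wf[OF T] .
  have ST: "Sig \<subseteq> T" using qthy_Sig[OF T] .
  have comp: "genA T (genA Sig G) = genA T G" if "G \<subseteq> OVF" for G
    using gen_comp[OF wfSig wT ST that] .
  have "equiv TC (Phi T)"
    unfolding equiv_def refl_on_def sym_def trans_def Phi_def by auto
  moreover have "(lub LL {a,c}, lub LL {b,d}) \<in> Phi T" if "(a,b) \<in> Phi T" "(c,d) \<in> Phi T" for a b c d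
  proof -
    have ab: "a \<in> TC" "b \<in> TC" "genA T (At a) = genA T (At b)" using that(1) by (auto simp: Phi_def)
    have cd: "c \<in> TC" "d \<in> TC" "genA T (At c) = genA T (At d)" using that(2) by (auto simp: Phi_def)
    have j: "genA T (At (lub LL {x,y})) = genA T (genA T (At x) \<union> genA T (At y))" if "x \<in> TC" "y \<in> TC" for x y
    proof -
      have o: "At x \<subseteq> OVF" "At y \<subseteq> OVF" using TC_OV that by auto
      have "At (lub LL {x,y}) = genA Sig (At x \<union> At y)" using join_eq[OF TC_LL[OF that(1)] TC_LL[OF that(2)]] by simp
      hence "genA T (At (lub LL {x,y})) = genA T (At x \<union> At y)" using comp o by simp
      thus ?thesis using gen_Un[OF wT o] by simp
    qed
    show ?thesis unfolding Phi_def using join_TC ab cd j by simp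
  qed
  moreover have "(hat ar F LL e a, hat ar F LL e b) \<in> Phi T"
    if e: "is_hom af F F e" and ab: "(a,b) \<in> Phi T" for e a b
  proof -
    have ab': "a \<in> TC" "b \<in> TC" "genA T (At a) = genA T (At b)" using ab by (auto simp: Phi_def)
    obtain als where a: "set als \<subseteq> OVF" "a = mk (genA Sig (set als))" using TC_fin[OF ab'(1)] by blast
    obtain bls where b: "set bls \<subseteq> OVF" "b = mk (genA Sig (set bls))" using TC_fin[OF ab'(2)] by blast
    have ea: "fatom_map e ` set als \<subseteq> OVF" and eb: "fatom_map e ` set bls \<subseteq> OVF"
      using a b fatom_map_OV[OF e] by auto
    have ha: "hat ar F LL e a = mk (genA Sig (fatom_map e ` set als))" using hat_eq[OF e a(1)] a(2) by simp
    have hb: "hat ar F LL e b = mk (genA Sig (fatom_map e ` set bls))" using hat_eq[OF e b(1)] b(2) by simp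
    have "genA T (set als) = genA T (set bls)" using ab'(3) a b comp by simp
    hence "genA T (fatom_map e ` set als) = genA T (fatom_map e ` set bls)" using PB_eq[OF wT e a(1) b(1)] by blast
    moreover have "hat ar F LL e a \<in> TC" "hat ar F LL e b \<in> TC" using ha hb TC_gen ea eb by auto
    ultimately show ?thesis unfolding Phi_def using ha hb comp ea eb by simp
  qed
  ultimately show ?thesis unfolding ConSn_def Let_def by blast
qed

lemma Phi_mono:
  assumes T1: "qthy T1" and T2: "qthy T2" and T12: "T1 \<subseteq> T2"
  shows "Phi T1 \<subseteq> Phi T2"
proof
  fix p assume "p \<in> Phi T1"
  then obtain a b where p: "p = (a,b)" "a \<in> TC" "b \<in> TC" "genA T1 (At a) = genA T1 (At b)" by (auto simp: Phi_def)
  have "genA T2 (At a) = genA T2 (genA T1 (At a))" using gen_comp[OF qthy_wf[OF T1] qthy_wf[OF T2] T12 TC_OV[OF p(2)]] by simp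
  also have "\<dots> = genA T2 (genA T1 (At b))" using p(4) by simp
  also have "\<dots> = genA T2 (At b)" using gen_comp[OF qthy_wf[OF T1] qthy_wf[OF T2] T12 TC_OV[OF p(3)]] by simp
  finally show "p \<in> Phi T2" using p by (simp add: Phi_def)
qed

lemma rename:
  assumes w: "wf_qid af ar q" and c: "card (qvars q) \<le> n"
  shows "\<exists>ps b. (\<forall>p\<in>set ps. natom p) \<and> natom b \<and> (\<forall>X. q \<in> Cn af ar X \<longleftrightarrow> (ps, b) \<in> Cn af ar X)"
proof -
  define V where "V = qvars q"
  have fV: "finite V" by (simp add: V_def finite_qvars)
  obtain \<rho> where \<rho>: "bij_betw \<rho> V {0..<card V}" using ex_bij_betw_finite_nat[OF fV] by blast
  define \<sigma> :: "nat \<Rightarrow> ('f,nat) trm" where "\<sigma> v = Var (\<rho> v)" for v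
  define ps where "ps = map (substA \<sigma>) (fst q)"
  define b where "b = substA \<sigma> (snd q)"
  have avV: "avars a \<subseteq> V" if "a \<in> set (fst q) \<or> a = snd q" for a
    using that by (auto simp: V_def qvars_def)
  have wq: "\<forall>p\<in>set (fst q). wf_atom af ar p" "wf_atom af ar (snd q)" using w by (auto simp: wf_qid_def)
  have nat: "natom (substA \<sigma> a)" if "wf_atom af ar a" "avars a \<subseteq> V" for a
  proof -
    have "wf_atom af ar (substA \<sigma> a)" using wf_substA[OF that(1), of \<sigma>] by (simp add: \<sigma>_def)
    moreover have "avars (substA \<sigma> a) \<subseteq> {..<n}"
    proof
      fix w assume "w \<in> avars (substA \<sigma> a)"
      then obtain v where v: "v \<in> avars a" "w = \<rho> v" unfolding avars_substA by (auto simp: \<sigma>_def)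
      have "\<rho> v \<in> {0..<card V}" using \<rho> v(1) that(2) by (meson bij_betwE subsetD)
      thus "w \<in> {..<n}" using v(2) c by (auto simp: V_def)
    qed
    ultimately show ?thesis by (simp add: natom_def)
  qed
  have ps: "\<forall>p\<in>set ps. natom p" unfolding ps_def using nat wq avV by auto
  have bb: "natom b" unfolding b_def using nat wq avV by auto
  have sat: "sat_qid A q \<longleftrightarrow> sat_qid A (ps, b)" for A :: "(('f,nat) trm set,'f,'r) struc"
  proof
    assume s: "sat_qid A q"
    show "sat_qid A (ps, b)" unfolding sat_qid_def
    proof (intro allI impI)
      fix h :: "nat \<Rightarrow> _" assume h: "range h \<subseteq> carrier A" and p: "\<forall>p\<in>set (fst (ps, b)). holds A h p"
      have "range (\<lambda>v. eval A h (\<sigma> v)) \<subseteq> carrier A" using h by (auto simp: \<sigma>_def)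
      moreover have "\<forall>p\<in>set (fst q). holds A (\<lambda>v. eval A h (\<sigma> v)) p"
        using p by (auto simp: ps_def holds_subst)
      ultimately have "holds A (\<lambda>v. eval A h (\<sigma> v)) (snd q)" using s unfolding sat_qid_def by blast
      thus "holds A h (snd (ps, b))" by (simp add: b_def holds_subst)
    qed
  next
    assume s: "sat_qid A (ps, b)"
    show "sat_qid A q" unfolding sat_qid_def
    proof (intro allI impI)
      fix h :: "nat \<Rightarrow> _" assume h: "range h \<subseteq> carrier A" and p: "\<forall>p\<in>set (fst q). holds A h p"
      define h' where "h' w = h (inv_into V \<rho> w)" for w
      have h'c: "range h' \<subseteq> carrier A" using h by (auto simp: h'_def)
      have inj: "inj_on \<rho> V" using \<rho> by (simp add: bij_betw_def)
      have agree: "holds A (\<lambda>v. eval A h' (\<sigma> v)) a \<longleftrightarrow> holds A h a" if "avars a \<subseteq> V" for a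
        by (rule holds_cong) (use that inv_into_f_f[OF inj] in \<open>auto simp: \<sigma>_def h'_def\<close>)
      have "\<forall>p\<in>set (fst (ps, b)). holds A h' p"
        using p agree avV by (auto simp: ps_def holds_subst)
      hence "holds A h' (snd (ps, b))" using s h'c unfolding sat_qid_def by blast
      hence "holds A (\<lambda>v. eval A h' (\<sigma> v)) (snd q)" by (simp add: b_def holds_subst)
      thus "holds A h (snd q)" using agree avV by blast
    qed
  qed
  have "q \<in> Cn af ar X \<longleftrightarrow> (ps, b) \<in> Cn af ar X" for X
  proof -
    have "wf_qid af ar (ps, b)" using ps bb by (simp add: wf_qid_def natom_def)
    thus ?thesis using w sat by (simp add: Cn_def)
  qed
  thus ?thesis using ps bb by blast
qed

end



context FS
begin

lemma join_le:
  assumes x: "x \<in> LL" and y: "y \<in> LL" and xy: "At x \<subseteq> At y"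
  shows "lub LL {x,y} = y" "lub LL {y,x} = y"
proof -
  have "lub LL {x,y} = mk (genA Sig (At x \<union> At y))" using join_eq[OF x y] .
  also have "At x \<union> At y = At y" using xy by blast
  also have "genA Sig (At y) = At y" using gen_closed LL_iff y by blast
  finally show "lub LL {x,y} = y" by simp
  thus "lub LL {y,x} = y" by (simp add: insert_commute)
qed

lemma join_self: "x \<in> LL \<Longrightarrow> lub LL {x,x} = x"
  using join_le(1)[of x x] by simp

lemma At_join: "x \<in> LL \<Longrightarrow> y \<in> LL \<Longrightarrow> At (lub LL {x,y}) = genA Sig (At x \<union> At y)"
  using join_eq by simp

lemma At_join_ge: "x \<in> LL \<Longrightarrow> y \<in> LL \<Longrightarrow> At x \<subseteq> At (lub LL {x,y}) \<and> At y \<subseteq> At (lub LL {x,y})"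
proof -
  assume x: "x \<in> LL" and y: "y \<in> LL"
  have o: "At x \<union> At y \<subseteq> OVF" using x y LL_iff CSx_OV by blast
  show ?thesis using At_join[OF x y] gen_ext[OF wfSig o] by blast
qed

lemma ConSn_D:
  assumes "E \<in> ConSn af ar Sig n"
  shows "equiv TC E"
    and "\<And>a b c d. (a,b) \<in> E \<Longrightarrow> (c,d) \<in> E \<Longrightarrow> (lub LL {a,c}, lub LL {b,d}) \<in> E"
    and "\<And>e a b. is_hom af F F e \<Longrightarrow> (a,b) \<in> E \<Longrightarrow> (hat ar F LL e a, hat ar F LL e b) \<in> E"
  using assms unfolding ConSn_def Let_def by blast+

lemma natom_list:
  assumes "set als \<subseteq> OVF"
  shows "\<exists>ps. (\<forall>p\<in>set ps. natom p) \<and> fa ` set ps = set als"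
proof -
  define ps where "ps = map (\<lambda>al. SOME p. natom p \<and> al = fa p) als"
  have s: "natom (SOME p. natom p \<and> al = fa p) \<and> al = fa (SOME p. natom p \<and> al = fa p)" if "al \<in> set als" for al
  proof -
    have "\<exists>p. natom p \<and> al = fa p" using OV_fa that assms by blast
    thus ?thesis by (rule someI_ex)
  qed
  have "\<forall>p\<in>set ps. natom p" using s by (auto simp: ps_def)
  moreover have "fa ` set ps = set als"
  proof
    show "fa ` set ps \<subseteq> set als" using s by (auto simp: ps_def)
    show "set als \<subseteq> fa ` set ps"
    proof
      fix al assume al: "al \<in> set als"
      hence "al = fa (SOME p. natom p \<and> al = fa p)" using s by blast
      moreover have "(SOME p. natom p \<and> al = fa p) \<in> set ps" using al by (auto simp: ps_def)
      ultimately show "al \<in> fa ` set ps" by blast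
    qed
  qed
  ultimately show ?thesis by blast
qed

lemma Phi_refl:
  assumes T1: "T1 \<in> QTheories af ar Sig n" and T2: "T2 \<in> QTheories af ar Sig n" and P: "Phi T1 \<subseteq> Phi T2"
  shows "T1 \<subseteq> T2"
proof -
  have q1: "qthy T1" and q2: "qthy T2" using T1 T2 QT_qthy by auto
  obtain Ph where Ph: "\<forall>q\<in>Ph. wf_qid af ar q \<and> card (qvars q) \<le> n" "T1 = Cn af ar (Sig \<union> Ph)"
    using T1 unfolding QTheories_def by blast
  have wSP: "\<forall>q\<in>Sig \<union> Ph. wf_qid af ar q" using Ph(1) wfSig by blast
  have w1: "\<forall>q\<in>T1. wf_qid af ar q" and w2: "\<forall>q\<in>T2. wf_qid af ar q" using qthy_wf q1 q2 by auto
  have "Ph \<subseteq> T2"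
  proof
    fix q assume q: "q \<in> Ph"
    obtain ps b where r: "\<forall>p\<in>set ps. natom p" "natom b" "\<And>X. q \<in> Cn af ar X \<longleftrightarrow> (ps, b) \<in> Cn af ar X"
      using rename[of q] Ph(1) q by blast
    have "q \<in> T1" using Cn_sub[OF wSP] q Ph(2) by blast
    hence "(ps, b) \<in> T1" using r(3)[of T1] qthy_Cn[OF q1] by simp
    hence fb: "fa b \<in> genA T1 (fa ` set ps)" using M[OF q1 r(1) r(2)] by blast
    define G where "G = fa ` set ps"
    have G: "G \<subseteq> OVF" "finite G" using r(1) fa_OV by (auto simp: G_def)
    have G': "insert (fa b) G \<subseteq> OVF" "finite (insert (fa b) G)" using G fa_OV[OF r(2)] by auto
    define a where "a = mk (genA Sig G)"
    define c where "c = mk (genA Sig (insert (fa b) G))"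
    have aT: "a \<in> TC" "c \<in> TC" using TC_gen G G' by (auto simp: a_def c_def)
    have ST1: "Sig \<subseteq> T1" "Sig \<subseteq> T2" using qthy_Sig q1 q2 by auto
    have "genA T1 (At c) = genA T1 (insert (fa b) G)" using gen_comp[OF wfSig w1 ST1(1) G'(1)] by (simp add: c_def)
    also have "\<dots> = genA T1 G"
      by (rule gen_sandwich[OF w1]) (use fb gen_ext[OF w1 G(1)] G in \<open>auto simp: G_def\<close>)
    also have "\<dots> = genA T1 (At a)" using gen_comp[OF wfSig w1 ST1(1) G(1)] by (simp add: a_def)
    finally have "(a, c) \<in> Phi T1" using aT by (simp add: Phi_def)
    hence "(a, c) \<in> Phi T2" using P by blast
    hence "genA T2 (At a) = genA T2 (At c)" by (simp add: Phi_def)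
    hence "genA T2 G = genA T2 (insert (fa b) G)"
      using gen_comp[OF wfSig w2 ST1(2) G(1)] gen_comp[OF wfSig w2 ST1(2) G'(1)] by (simp add: a_def c_def)
    hence "fa b \<in> genA T2 (fa ` set ps)" using gen_ext[OF w2 G'(1)] by (simp add: G_def)
    hence "(ps, b) \<in> T2" using M[OF q2 r(1) r(2)] by blast
    hence "(ps, b) \<in> Cn af ar T2" using qthy_Cn[OF q2] by simp
    thus "q \<in> T2" using r(3)[of T2] qthy_Cn[OF q2] by simp
  qed
  hence "Sig \<union> Ph \<subseteq> T2" using qthy_Sig[OF q2] by blast
  hence "Cn af ar (Sig \<union> Ph) \<subseteq> Cn af ar T2" by (rule Cn_mono)
  thus ?thesis using Ph(2) qthy_Cn[OF q2] by simp
qed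

end



locale FSE = FS af ar Sig n for af :: "'f \<Rightarrow> nat" and ar :: "'r \<Rightarrow> nat" and Sig n +
  fixes E
  assumes E: "E \<in> ConSn af ar Sig n"
begin

definition PhiE :: "('f,'r) qid set" where
  "PhiE = {q. (\<forall>p\<in>set (fst q). natom p) \<and> natom (snd q) \<and>
     (mk (genA Sig (fa ` set (fst q))), mk (genA Sig (insert (fa (snd q)) (fa ` set (fst q))))) \<in> E}"

definition TE :: "('f,'r) qid set" where
  "TE = Cn af ar (Sig \<union> PhiE)"

lemma Eeq: "equiv TC E" using ConSn_D(1)[OF E] .
lemma Ej: "(a,b) \<in> E \<Longrightarrow> (c,d) \<in> E \<Longrightarrow> (lub LL {a,c}, lub LL {b,d}) \<in> E" using ConSn_D(2)[OF E] .
lemma Eh: "is_hom af F F e \<Longrightarrow> (a,b) \<in> E \<Longrightarrow> (hat ar F LL e a, hat ar F LL e b) \<in> E" using ConSn_D(3)[OF E] .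

lemma E_TC: "(a,b) \<in> E \<Longrightarrow> a \<in> TC \<and> b \<in> TC"
  using Eeq by (auto simp: equiv_def)
lemma E_refl: "a \<in> TC \<Longrightarrow> (a,a) \<in> E"
  using Eeq by (auto simp: equiv_def refl_on_def)
lemma E_sym: "(a,b) \<in> E \<Longrightarrow> (b,a) \<in> E"
  using Eeq by (auto simp: equiv_def dest: symD)
lemma E_trans: "(a,b) \<in> E \<Longrightarrow> (b,c) \<in> E \<Longrightarrow> (a,c) \<in> E"
  using Eeq by (auto simp: equiv_def dest: transD)

lemma wfSP: "\<forall>q\<in>Sig \<union> PhiE. wf_qid af ar q"
  using wfSig by (auto simp: PhiE_def wf_qid_def natom_def)

lemma qthyTE: "qthy TE"
  unfolding qthy_def qe_theory_def TE_def using Cn_idem[OF wfSP] Cn_mono[of Sig "Sig \<union> PhiE" af ar] by blast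

lemma wTE: "\<forall>q\<in>TE. wf_qid af ar q" using qthy_wf[OF qthyTE] .

lemma STE: "Sig \<subseteq> TE" using qthy_Sig[OF qthyTE] .

lemma PhiE_TE: "PhiE \<subseteq> TE" unfolding TE_def using Cn_sub[OF wfSP] by blast

lemma TE_QT: "TE \<in> QTheories af ar Sig n"
proof -
  have "\<forall>q\<in>PhiE. wf_qid af ar q \<and> card (qvars q) \<le> n"
  proof
    fix q assume q: "q \<in> PhiE"
    have "wf_qid af ar q" using wfSP q by blast
    moreover have "qvars q \<subseteq> {..<n}" using q by (auto simp: PhiE_def qvars_def natom_def)
    hence "card (qvars q) \<le> card {..<n}" by (intro card_mono) auto
    ultimately show "wf_qid af ar q \<and> card (qvars q) \<le> n" by simp
  qed
  thus ?thesis using qthyTE unfolding QTheories_def qthy_def TE_def by blast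
qed

lemma K1:
  assumes a: "a \<in> TC" and c: "c \<in> TC" and ac: "(a,c) \<in> E" and sub: "At a \<subseteq> At c"
  shows "At c \<subseteq> genA TE (At a)"
proof
  fix g assume g: "g \<in> At c"
  obtain als where als: "set als \<subseteq> OVF" "a = mk (genA Sig (set als))" using TC_fin[OF a] by blast
  obtain ps where ps: "\<forall>p\<in>set ps. natom p" "fa ` set ps = set als" using natom_list[OF als(1)] by blast
  have gO: "g \<in> OVF" using g TC_OV[OF c] by blast
  obtain b where b: "natom b" "g = fa b" using OV_fa[OF gO] by blast
  define G where "G = set als"
  have G: "G \<subseteq> OVF" "finite G" using als(1) by (auto simp: G_def)
  have G': "insert g G \<subseteq> OVF" "finite (insert g G)" using G gO by auto
  define a' where "a' = mk (genA Sig (insert g G))"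
  have a'T: "a' \<in> TC" using TC_gen[OF G'(2) G'(1)] by (simp add: a'_def)
  have Aa: "At a = genA Sig G" using als(2) by (simp add: G_def)
  have "At a \<subseteq> At a'" unfolding Aa a'_def At_mk by (rule gen_mono[OF wfSig _ G'(1)]) blast
  moreover have "At a' \<subseteq> At c"
  proof -
    have "insert g G \<subseteq> At c" using g sub gen_ext[OF wfSig G(1)] Aa by blast
    thus ?thesis unfolding a'_def At_mk using gen_least TC_CS[OF c] by blast
  qed
  ultimately have j1: "lub LL {a', a} = a'" and j2: "lub LL {a', c} = c"
    using join_le TC_LL[OF a] TC_LL[OF a'T] TC_LL[OF c] by auto
  have "(lub LL {a', a}, lub LL {a', c}) \<in> E" using Ej[OF E_refl[OF a'T] ac] .
  hence "(a', c) \<in> E" using j1 j2 by simp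
  hence "(a, a') \<in> E" using ac E_sym E_trans by blast
  hence "(ps, b) \<in> PhiE" using ps b als by (simp add: PhiE_def a'_def G_def)
  hence "(ps, b) \<in> TE" using PhiE_TE by blast
  hence "fa b \<in> genA TE (fa ` set ps)" using M[OF qthyTE ps(1) b(1)] by blast
  also have "fa ` set ps = G" using ps by (simp add: G_def)
  also have "genA TE G = genA TE (At a)" using gen_comp[OF wfSig wTE STE G(1)] Aa by simp
  finally show "g \<in> genA TE (At a)" using b by simp
qed

lemma E_sub: "E \<subseteq> Phi TE"
proof
  fix x assume x: "x \<in> E"
  then obtain a b where ab: "x = (a,b)" "(a,b) \<in> E" by (cases x) auto
  have T: "a \<in> TC" "b \<in> TC" using E_TC[OF ab(2)] by auto
  have L: "a \<in> LL" "b \<in> LL" using TC_LL T by auto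
  define c where "c = lub LL {a,b}"
  have cT: "c \<in> TC" using join_TC T by (simp add: c_def)
  have ac: "(a,c) \<in> E" using Ej[OF E_refl[OF T(1)] ab(2)] join_self[OF L(1)] by (simp add: c_def)
  have "(c,b) \<in> E" using Ej[OF ab(2) E_refl[OF T(2)]] join_self[OF L(2)] by (simp add: c_def)
  hence bc: "(b,c) \<in> E" by (rule E_sym)
  have ge: "At a \<subseteq> At c" "At b \<subseteq> At c" using At_join_ge[OF L] by (auto simp: c_def)
  have eq: "genA TE (At x') = genA TE (At c)" if "x' \<in> TC" "(x',c) \<in> E" "At x' \<subseteq> At c" for x'
  proof
    have o: "At x' \<subseteq> OVF" "At c \<subseteq> OVF" using TC_OV that(1) cT by auto
    show "genA TE (At x') \<subseteq> genA TE (At c)" using gen_mono[OF wTE that(3) o(2)] .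
    have "At c \<subseteq> genA TE (At x')" using K1[OF that(1) cT that(2) that(3)] .
    thus "genA TE (At c) \<subseteq> genA TE (At x')" using gen_least[OF gen_CS[OF wTE o(1)]] by blast
  qed
  have "genA TE (At a) = genA TE (At b)" using eq[OF T(1) ac ge(1)] eq[OF T(2) bc ge(2)] by simp
  thus "x \<in> Phi TE" using ab T by (simp add: Phi_def)
qed

lemma K2:
  assumes a: "a \<in> TC" and b: "b \<in> TC" and sub: "At b \<subseteq> genA TE (At a)"
  shows "(a, lub LL {a,b}) \<in> E"
proof -
  define C where "C = {c \<in> TC. At a \<subseteq> At c \<and> (a,c) \<in> E}"
  define D where "D = \<Union>(At ` C)"
  have aC: "a \<in> C" using a E_refl by (simp add: C_def)
  have ne: "At ` C \<noteq> {}" using aC by blast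
  have dirC: "lub LL {c1,c2} \<in> C" if "c1 \<in> C" "c2 \<in> C" for c1 c2
  proof -
    have c: "c1 \<in> TC" "c2 \<in> TC" "At a \<subseteq> At c1" "(a,c1) \<in> E" "(a,c2) \<in> E" using that by (auto simp: C_def)
    have "lub LL {c1,c2} \<in> TC" using join_TC c by blast
    moreover have "At a \<subseteq> At (lub LL {c1,c2})" using At_join_ge[OF TC_LL[OF c(1)] TC_LL[OF c(2)]] c(3) by blast
    moreover have "(a, lub LL {c1,c2}) \<in> E" using Ej[OF c(4) c(5)] join_self[OF TC_LL[OF a]] by simp
    ultimately show ?thesis by (simp add: C_def)
  qed
  have dir: "\<exists>D3\<in>At ` C. D1 \<union> D2 \<subseteq> D3" if d: "D1 \<in> At ` C" "D2 \<in> At ` C" for D1 D2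
  proof -
    obtain c1 c2 where c: "c1 \<in> C" "c2 \<in> C" "D1 = At c1" "D2 = At c2" using d by blast
    have "c1 \<in> TC" "c2 \<in> TC" using c by (auto simp: C_def)
    hence "D1 \<union> D2 \<subseteq> At (lub LL {c1,c2})" using At_join_ge TC_LL c by blast
    thus ?thesis using dirC[OF c(1) c(2)] by blast
  qed
  have all: "structS af ar F D' \<and> closedS Sig F D'" if "D' \<in> At ` C" for D'
    using that TC_CS unfolding C_def CSx_def by blast
  have U: "structS af ar F D \<and> closedS Sig F D" unfolding D_def using union_cong[OF ne dir all] .
  have fin: "\<exists>c\<in>C. W \<subseteq> At c" if w: "finite W" "W \<subseteq> D" for W
  proof -
    have "\<exists>D'\<in>At ` C. W \<subseteq> D'" using dir_fin[OF ne dir w(1)] w(2) unfolding D_def by blast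
    thus ?thesis by blast
  qed
  have cl: "closedS PhiE F D" unfolding closedS_def
  proof (intro ballI allI impI)
    fix q and k :: "nat \<Rightarrow> _" assume q: "q \<in> PhiE" and k: "range k \<subseteq> carrier F" and p: "\<forall>p\<in>set (fst q). ev F k p \<in> D"
    have k': "\<forall>v. k v \<in> carrier F" using k by auto
    define ps where "ps = fst q"
    define bb where "bb = snd q"
    have ps: "\<forall>p\<in>set ps. natom p" and bb: "natom bb"
      and qE: "(mk (genA Sig (fa ` set ps)), mk (genA Sig (insert (fa bb) (fa ` set ps)))) \<in> E"
      using q by (auto simp: PhiE_def ps_def bb_def)
    define e where "e = gh F k"
    have e: "is_hom af F F e" using gh_hom[OF F_model k] by (simp add: e_def)
    have fe: "fatom_map e (fa x) = ev F k x" if "natom x" for x using fa_hom[OF F_model k that] by (simp add: e_def)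
    define W where "W = ev F k ` set ps"
    have W: "W \<subseteq> OVF" "finite W" using ps ev_OV[OF F_struc natom_wf k'] by (auto simp: W_def)
    have Wb: "insert (ev F k bb) W \<subseteq> OVF" using W ev_OV[OF F_struc natom_wf[OF bb] k'] by auto
    have s1: "set (map fa ps) \<subseteq> OVF" using ps fa_OV by auto
    have s2: "set (fa bb # map fa ps) \<subseteq> OVF" using s1 fa_OV[OF bb] by auto
    have i1: "fatom_map e ` set (map fa ps) = W" using fe ps by (force simp: W_def)
    have i2: "fatom_map e ` set (fa bb # map fa ps) = insert (ev F k bb) W" using i1 fe[OF bb] by simp
    define x where "x = hat ar F LL e (mk (genA Sig (fa ` set ps)))"
    define y where "y = hat ar F LL e (mk (genA Sig (insert (fa bb) (fa ` set ps))))"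
    have x: "x = mk (genA Sig W)" using hat_eq[OF e s1] i1 by (simp add: x_def)
    have y: "y = mk (genA Sig (insert (ev F k bb) W))" using hat_eq[OF e s2] i2 by (simp add: y_def)
    have xy: "(x,y) \<in> E" using Eh[OF e qE] by (simp add: x_def y_def)
    have "W \<subseteq> D" using p by (auto simp: W_def ps_def)
    then obtain c where c: "c \<in> C" "W \<subseteq> At c" using fin[OF W(2)] by blast
    have cT: "c \<in> TC" "At a \<subseteq> At c" "(a,c) \<in> E" using c by (auto simp: C_def)
    have xT: "x \<in> TC" "y \<in> TC" using E_TC[OF xy] by auto
    have "At x \<subseteq> At c" using x gen_least TC_CS[OF cT(1)] c(2) by simp
    hence j1: "lub LL {x, c} = c" using join_le TC_LL xT cT by blast
    have "(lub LL {x,c}, lub LL {y,c}) \<in> E" using Ej[OF xy E_refl[OF cT(1)]] .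
    hence "(c, lub LL {y,c}) \<in> E" using j1 by simp
    hence ac': "(a, lub LL {y,c}) \<in> E" using cT(3) E_trans by blast
    have ge: "At y \<subseteq> At (lub LL {y,c})" "At c \<subseteq> At (lub LL {y,c})" using At_join_ge TC_LL xT cT by blast+
    have "lub LL {y,c} \<in> C" using ac' ge(2) cT(2) join_TC[OF xT(2) cT(1)] by (auto simp: C_def)
    moreover have "ev F k bb \<in> At y" using y gen_ext[OF wfSig Wb] by simp
    ultimately show "ev F k (snd q) \<in> D" using ge(1) unfolding D_def bb_def by blast
  qed
  have CS: "CSx (Sig \<union> PhiE) D" unfolding CSx_def using U cl closedS_Un by blast
  hence "mk D \<in> ConK af ar (Sig \<union> PhiE) F" using ConK_CS[OF wfSP] by simp
  hence c: "is_cong af ar F (mk D)" and m: "model af ar (Sig \<union> PhiE) (quot F (mk D))" by (auto simp: ConK_def)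
  have "model af ar TE (quot F (mk D))" using quot_model_Cn[OF c wfSP m] by (simp add: TE_def)
  hence "mk D \<in> ConK af ar TE F" using c by (simp add: ConK_def)
  hence DT: "CSx TE D" using ConK_CS[OF wTE] by simp
  have "At a \<subseteq> D" using aC unfolding D_def by blast
  hence "genA TE (At a) \<subseteq> D" using gen_least[OF DT] by blast
  hence bD: "At b \<subseteq> D" using sub by blast
  obtain Gb where Gb: "finite Gb" "Gb \<subseteq> OVF" "b = mk (genA Sig Gb)" using TC_iff b by blast
  have "Gb \<subseteq> D" using bD Gb gen_ext[OF wfSig Gb(2)] by auto
  then obtain c where c: "c \<in> C" "Gb \<subseteq> At c" using fin[OF Gb(1)] by blast
  have cT: "c \<in> TC" "(a,c) \<in> E" using c by (auto simp: C_def)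
  have "At b \<subseteq> At c" using Gb(3) gen_least TC_CS[OF cT(1)] c(2) by simp
  hence j: "lub LL {c, b} = c" using join_le TC_LL b cT by blast
  have "(lub LL {a,b}, lub LL {c,b}) \<in> E" using Ej[OF cT(2) E_refl[OF b]] .
  hence "(lub LL {a,b}, c) \<in> E" using j by simp
  thus ?thesis using cT(2) E_sym E_trans by blast
qed

lemma Phi_sub: "Phi TE \<subseteq> E"
proof
  fix x assume x: "x \<in> Phi TE"
  then obtain a b where ab: "x = (a,b)" "a \<in> TC" "b \<in> TC" "genA TE (At a) = genA TE (At b)" by (auto simp: Phi_def)
  have o: "At a \<subseteq> OVF" "At b \<subseteq> OVF" using TC_OV ab by auto
  have "At b \<subseteq> genA TE (At a)" using gen_ext[OF wTE o(2)] ab(4) by simp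
  hence 1: "(a, lub LL {a,b}) \<in> E" using K2[OF ab(2) ab(3)] by blast
  have "At a \<subseteq> genA TE (At b)" using gen_ext[OF wTE o(1)] ab(4) by simp
  hence "(b, lub LL {b,a}) \<in> E" using K2[OF ab(3) ab(2)] by blast
  hence "(b, lub LL {a,b}) \<in> E" by (simp add: insert_commute)
  thus "x \<in> E" using 1 ab(1) E_sym E_trans by blast
qed

lemma surj: "\<exists>T\<in>QTheories af ar Sig n. Phi T = E"
  using TE_QT E_sub Phi_sub by blast

end

context FS
begin

theorem main:
  "\<exists>\<Phi>. bij_betw \<Phi> (QTheories af ar Sig n) (ConSn af ar Sig n) \<and>
     (\<forall>T1\<in>QTheories af ar Sig n. \<forall>T2\<in>QTheories af ar Sig n. T1 \<subseteq> T2 \<longleftrightarrow> \<Phi> T1 \<subseteq> \<Phi> T2)"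
proof (intro exI conjI)
  have ord: "\<forall>T1\<in>QTheories af ar Sig n. \<forall>T2\<in>QTheories af ar Sig n. T1 \<subseteq> T2 \<longleftrightarrow> Phi T1 \<subseteq> Phi T2"
    using Phi_mono Phi_refl QT_qthy by blast
  show "\<forall>T1\<in>QTheories af ar Sig n. \<forall>T2\<in>QTheories af ar Sig n. T1 \<subseteq> T2 \<longleftrightarrow> Phi T1 \<subseteq> Phi T2" by (rule ord)
  show "bij_betw Phi (QTheories af ar Sig n) (ConSn af ar Sig n)" unfolding bij_betw_def
  proof
    show "inj_on Phi (QTheories af ar Sig n)"
      by (rule inj_onI) (use ord in blast)
    show "Phi ` QTheories af ar Sig n = ConSn af ar Sig n"
    proof
      show "Phi ` QTheories af ar Sig n \<subseteq> ConSn af ar Sig n" using Phi_ConSn QT_qthy by blast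
      show "ConSn af ar Sig n \<subseteq> Phi ` QTheories af ar Sig n"
      proof
        fix E assume "E \<in> ConSn af ar Sig n"
        then interpret FSE af ar Sig n E by unfold_locales
        show "E \<in> Phi ` QTheories af ar Sig n" using surj by force
      qed
    qed
  qed
qed

end


theorem theorem3p3:
  fixes af :: "'f \<Rightarrow> nat" and ar :: "'r \<Rightarrow> nat"
    and Sig :: "('f,'r) qid set" and n :: nat
  assumes "\<forall>q\<in>Sig. wf_qid af ar q"
    and "n \<ge> 1"
  shows "\<exists>\<Phi>. bij_betw \<Phi> (QTheories af ar Sig n) (ConSn af ar Sig n) \<and>
           (\<forall>T1\<in>QTheories af ar Sig n. \<forall>T2\<in>QTheories af ar Sig n.
              T1 \<subseteq> T2 \<longleftrightarrow> \<Phi> T1 \<subseteq> \<Phi> T2)"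
proof -
  interpret FS af ar Sig n using assms by unfold_locales
  show ?thesis by (rule main)
qed

end
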